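(* Suppose $N$ is sufficiently large. Define weights $W^0_j=1$ and $$W_j^{r+1}=\left((1-\mu)W_j^r+\frac{\mu}{M}\sum_{k=1}^MW_k^r\right)\beta^{\Phi_j^{r+1}}(1-\beta)^{1-\Phi_j^{r+1}},$$ and $P^r_j=W^r_j/\sum_{j'=1}^MW^r_{j'}$. Let $\delta_Q=c\sqrt{\frac{\ln N}{g(N)}}$ with $c=\frac{4M(2M+1)}{\mu(1-\beta)}\cdot\frac{\exp(\varepsilon/2)+1}{\exp(\varepsilon/2)-1}$, and $\delta_r=5^r\delta_Q$. Then for every option $j$ and round $r$, $P^r_j\overset{1+\delta_r}{\sim}Q^r_j$ holds with probability at least $1-\frac{(10M+3)r}{N^{10}}$, for all realizations of the signals $\Phi^r_j$.
   Context: Notation: for reals $a,b$ and $c\ge0$, $a\overset{c}{\sim}b$ means $\frac1c\le\frac ab\le c$. Setting. $\mathcal G=(\mathcal N,\mathcal E)$ is a connected, non-bipartite undirected graph on agents $\mathcal N=\{1,\dots,N\}$; $\mathcal N_i$ is the neighbor set of $i$, $N_i=|\mathcal N_i|$. There are $M$ options; quality signals $\Phi_j^r\in\{0,1\}$ are i.i.d. Bernoulli$(\eta_j)$ over rounds. $X^r_{i,j}\in\{0,1\}$ indicates agent $i$ adopts option $j$ in round $r$ ($\sum_jX^r_{i,j}\le1$); $D^r_j=\sum_iX^r_{i,j}$, $D^r=\sum_jD^r_j$, popularity $Q^r_j=D^r_j/D^r$, $Q^0_j=1/M$. The function $g:\mathbb N^+\to\mathbb R$ satisfies: for every $\ell>0$,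 $g(N)>\ell\ln N$ and $g(N)<\ell N$ for all sufficiently large $N$. Parameters: $\varepsilon>0$, $\mu\in(0,1)$, $\beta\in(1/2,1)$, $\sigma\ge11$, $h=16\sigma/(1-\beta)$. Metropolis–Hastings random walk: from $i$ move to $i'\in\mathcal N_i$ with probability $\min\{1/N_i,1/N_{i'}\}$, else stay; walk length $L=O(\log N)$ chosen so that the endpoint is at each agent with probability in $[\frac1N-\frac1{N^3},\frac1N+\frac1{N^3}]$. Round $r$: (1) an agent that adopted an option in round $r-1$ perturbs each coordinate of its adoption vector independently (keep with probability $\frac{e^{\varepsilon/2}}{e^{\varepsilon/2}+1}$, flip otherwise); (2) each such agent launches $hg(N)$ independent random-walk tokens of length $L$ carrying its perturbed vector (forwarded via per-agent FIFO queues, up to $hg(N)$ tokens per agent per slot); a token is sampled by the agent where it ends; (3) with $\Lambda^r_{i,j}$ the fraction of $i$'s sampled vectors with $j$-th coordinate $1$, $\widetilde Q^r_{i,j}=\max\{\frac{e^{\varepsilon/2}+1}{e^{\varepsilon/2}-1}\Lambda^r_{i,j}-\frac1{e^{\varepsilon/2}-1},0\}$, $\widehat Q^r_{i,j}=\widetilde Q^r_{i,j}/\sum_{j'}\widetilde Q^r_{i,j'}$, and $i$ selects option $j$ with probability $(1-\mu)\widehat Q^r_{i,j}+\mu/M$; (4) having selected $j^*$, $i$ adopts it with probability $\beta$ if $\Phi^r_{j^*}=1$, $1-\beta$ if $\Phi^r_{j^*}=0$, else adopts nothing. *)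

theory Defs
  imports "HOL-Probability.Probability"
begin

definition nbrs :: "(nat \<Rightarrow> nat \<Rightarrow> bool) \<Rightarrow> nat \<Rightarrow> nat \<Rightarrow> nat set" where
  "nbrs E N i = {k. k < N \<and> E i k}"

definition deg :: "(nat \<Rightarrow> nat \<Rightarrow> bool) \<Rightarrow> nat \<Rightarrow> nat \<Rightarrow> nat" where
  "deg E N i = card (nbrs E N i)"

definition good_graph :: "(nat \<Rightarrow> nat \<Rightarrow> bool) \<Rightarrow> nat \<Rightarrow> bool" where
  "good_graph E N \<longleftrightarrow>
     (\<forall>i k. E i k \<longrightarrow> i < N \<and> k < N) \<and>
     (\<forall>i k. E i k \<longrightarrow> E k i) \<and>
     (\<forall>i. \<not> E i i) \<and>
     (\<forall>i<N. \<forall>k<N. E\<^sup>*\<^sup>* i k) \<and>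
     \<not> (\<exists>S. \<forall>i k. E i k \<longrightarrow> (i \<in> S \<longleftrightarrow> k \<notin> S))"

definition mh_prob :: "(nat \<Rightarrow> nat \<Rightarrow> bool) \<Rightarrow> nat \<Rightarrow> nat \<Rightarrow> nat \<Rightarrow> real" where
  "mh_prob E N i k =
     (if k \<in> nbrs E N i then min (1 / real (deg E N i)) (1 / real (deg E N k))
      else if k = i then 1 - (\<Sum>k'\<in>nbrs E N i. min (1 / real (deg E N i)) (1 / real (deg E N k')))
      else 0)"

definition mh_step :: "(nat \<Rightarrow> nat \<Rightarrow> bool) \<Rightarrow> nat \<Rightarrow> nat \<Rightarrow> nat pmf" where
  "mh_step E N i = embed_pmf (mh_prob E N i)"

fun mh_walk :: "(nat \<Rightarrow> nat \<Rightarrow> bool) \<Rightarrow> nat \<Rightarrow> nat \<Rightarrow> nat \<Rightarrow> nat pmf" where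
  "mh_walk E N 0 i = return_pmf i"
| "mh_walk E N (Suc n) i = bind_pmf (mh_walk E N n i) (mh_step E N)"

definition good_walk_length :: "(nat \<Rightarrow> nat \<Rightarrow> bool) \<Rightarrow> nat \<Rightarrow> nat \<Rightarrow> bool" where
  "good_walk_length E N L \<longleftrightarrow>
     (\<forall>i<N. \<forall>k<N. 1 / real N - 1 / real N ^ 3 \<le> pmf (mh_walk E N L i) k \<and>
                   pmf (mh_walk E N L i) k \<le> 1 / real N + 1 / real N ^ 3)"

text \<open>An adoption state maps each agent to the adopted option (Some j, j < M) or None.\<close>

definition perturb_pmf :: "real \<Rightarrow> nat \<Rightarrow> (nat \<Rightarrow> nat option) \<Rightarrow> nat \<Rightarrow> (nat \<Rightarrow> bool) pmf" where
  "perturb_pmf \<epsilon> M x a =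
     Pi_pmf {..<M} False (\<lambda>j. map_pmf (\<lambda>keep. if keep then x a = Some j else x a \<noteq> Some j)
        (bernoulli_pmf (exp (\<epsilon>/2) / (exp (\<epsilon>/2) + 1))))"

definition Qtilde :: "real \<Rightarrow> real \<Rightarrow> real" where
  "Qtilde \<epsilon> \<Lambda> = max ((exp (\<epsilon>/2) + 1) / (exp (\<epsilon>/2) - 1) * \<Lambda> - 1 / (exp (\<epsilon>/2) - 1)) 0"

text \<open>Convention: if all estimates vanish (e.g. no samples), the normalized estimate is uniform.\<close>
definition Qhat :: "real \<Rightarrow> nat \<Rightarrow> (nat \<Rightarrow> real) \<Rightarrow> nat \<Rightarrow> real" where
  "Qhat \<epsilon> M \<Lambda> j =
     (let s = (\<Sum>j'<M. Qtilde \<epsilon> (\<Lambda> j')) in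
      if s = 0 then 1 / real M else Qtilde \<epsilon> (\<Lambda> j) / s)"

definition select_pmf :: "real \<Rightarrow> real \<Rightarrow> nat \<Rightarrow> (nat \<Rightarrow> real) \<Rightarrow> nat pmf" where
  "select_pmf \<epsilon> \<mu> M \<Lambda> =
     embed_pmf (\<lambda>j. if j < M then (1 - \<mu>) * Qhat \<epsilon> M \<Lambda> j + \<mu> / real M else 0)"

definition adopt_pmf :: "real \<Rightarrow> real \<Rightarrow> real \<Rightarrow> nat \<Rightarrow> (nat \<Rightarrow> bool) \<Rightarrow> (nat \<Rightarrow> real)
    \<Rightarrow> nat option pmf" where
  "adopt_pmf \<epsilon> \<mu> \<beta> M \<Phi>r \<Lambda> =
     bind_pmf (select_pmf \<epsilon> \<mu> M \<Lambda>) (\<lambda>j.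
     bind_pmf (bernoulli_pmf (if \<Phi>r j then \<beta> else 1 - \<beta>)) (\<lambda>a.
     return_pmf (if a then Some j else None)))"

text \<open>K = number of tokens per adopting agent; ends assigns each token its endpoint;
  pv gives each adopting agent's perturbed vector.\<close>
definition Lambda :: "nat set \<Rightarrow> nat \<Rightarrow> (nat \<Rightarrow> nat \<Rightarrow> bool) \<Rightarrow> (nat \<times> nat \<Rightarrow> nat)
    \<Rightarrow> nat \<Rightarrow> nat \<Rightarrow> real" where
  "Lambda A K pv ends i j =
     real (card {t \<in> A \<times> {..<K}. ends t = i \<and> pv (fst t) j})
     / real (card {t \<in> A \<times> {..<K}. ends t = i})"

definition round_step :: "(nat \<Rightarrow> nat \<Rightarrow> bool) \<Rightarrow> nat \<Rightarrow> nat \<Rightarrow> nat \<Rightarrow> nat \<Rightarrow> real \<Rightarrow> real \<Rightarrow> real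
    \<Rightarrow> (nat \<Rightarrow> bool) \<Rightarrow> (nat \<Rightarrow> nat option) \<Rightarrow> (nat \<Rightarrow> nat option) pmf" where
  "round_step E N L K M \<epsilon> \<mu> \<beta> \<Phi>r x =
     (let A = {i. i < N \<and> x i \<noteq> None} in
      bind_pmf (Pi_pmf A (\<lambda>_. False) (perturb_pmf \<epsilon> M x)) (\<lambda>pv.
      bind_pmf (Pi_pmf (A \<times> {..<K}) 0 (\<lambda>t. mh_walk E N L (fst t))) (\<lambda>ends.
      Pi_pmf {..<N} None (\<lambda>i. adopt_pmf \<epsilon> \<mu> \<beta> M \<Phi>r (Lambda A K pv ends i)))))"

text \<open>\<Phi> r j = quality signal of option j in round r (rounds r \<ge> 1).\<close>
fun adoption_proc :: "(nat \<Rightarrow> nat \<Rightarrow> bool) \<Rightarrow> nat \<Rightarrow> nat \<Rightarrow> nat \<Rightarrow> nat \<Rightarrow> real \<Rightarrow> real \<Rightarrow> real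
    \<Rightarrow> (nat \<Rightarrow> nat \<Rightarrow> bool) \<Rightarrow> nat \<Rightarrow> (nat \<Rightarrow> nat option) pmf" where
  "adoption_proc E N L K M \<epsilon> \<mu> \<beta> \<Phi> 0 = return_pmf (\<lambda>_. None)"
| "adoption_proc E N L K M \<epsilon> \<mu> \<beta> \<Phi> (Suc r) =
     bind_pmf (adoption_proc E N L K M \<epsilon> \<mu> \<beta> \<Phi> r) (round_step E N L K M \<epsilon> \<mu> \<beta> (\<Phi> (Suc r)))"

definition popularity :: "nat \<Rightarrow> nat \<Rightarrow> nat \<Rightarrow> (nat \<Rightarrow> nat option) \<Rightarrow> nat \<Rightarrow> real" where
  "popularity N M r x j =
     (if r = 0 then 1 / real M
      else real (card {i. i < N \<and> x i = Some j}) / real (card {i. i < N \<and> x i \<noteq> None}))"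

fun W :: "real \<Rightarrow> real \<Rightarrow> nat \<Rightarrow> (nat \<Rightarrow> nat \<Rightarrow> bool) \<Rightarrow> nat \<Rightarrow> nat \<Rightarrow> real" where
  "W \<mu> \<beta> M \<Phi> 0 j = 1"
| "W \<mu> \<beta> M \<Phi> (Suc r) j =
     ((1 - \<mu>) * W \<mu> \<beta> M \<Phi> r j + \<mu> / real M * (\<Sum>k<M. W \<mu> \<beta> M \<Phi> r k))
     * (if \<Phi> (Suc r) j then \<beta> else 1 - \<beta>)"

definition Pw :: "real \<Rightarrow> real \<Rightarrow> nat \<Rightarrow> (nat \<Rightarrow> nat \<Rightarrow> bool) \<Rightarrow> nat \<Rightarrow> nat \<Rightarrow> real" where
  "Pw \<mu> \<beta> M \<Phi> r j = W \<mu> \<beta> M \<Phi> r j / (\<Sum>k<M. W \<mu> \<beta> M \<Phi> r k)"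

definition approx_within :: "real \<Rightarrow> real \<Rightarrow> real \<Rightarrow> bool" where
  "approx_within c a b \<longleftrightarrow> 1 / c \<le> a / b \<and> a / b \<le> c"

end

theory Submission
  imports Defs
begin


lemma prob_bind_bad:
  assumes "measure_pmf.prob p BA \<le> a" "0 \<le> b"
    and "\<And>x. x \<in> set_pmf p \<Longrightarrow> x \<notin> BA \<Longrightarrow> measure_pmf.prob (f x) BB \<le> b"
  shows "measure_pmf.prob (bind_pmf p f) BB \<le> a + b"
proof -
  have "ennreal (measure_pmf.prob (bind_pmf p f) BB) = (\<integral>\<^sup>+x. emeasure (f x) BB \<partial>p)"
    by (simp add: measure_pmf.emeasure_eq_measure[symmetric])
  also have "\<dots> \<le> (\<integral>\<^sup>+x. ennreal (indicator BA x + b) \<partial>p)"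
  proof (rule nn_integral_mono_AE)
    show "AE x in measure_pmf p. emeasure (f x) BB \<le> ennreal (indicator BA x + b)"
    proof (rule AE_pmfI)
      fix x assume x: "x \<in> set_pmf p"
      have "measure_pmf.prob (f x) BB \<le> indicator BA x + b"
        using assms x by (cases "x \<in> BA") (auto simp: indicator_def intro: order.trans[OF measure_pmf.prob_le_1])
      then show "emeasure (f x) BB \<le> ennreal (indicator BA x + b)"
        by (simp add: measure_pmf.emeasure_eq_measure ennreal_leI)
    qed
  qed
  also have "\<dots> = ennreal (measure_pmf.expectation p (\<lambda>x. indicator BA x + b))"
    using assms(2) by (intro nn_integral_eq_integral measure_pmf.integrable_const_bound[where B="1 + b"]) (auto simp: indicator_def)
  also have "measure_pmf.expectation p (\<lambda>x. indicator BA x + b) = measure_pmf.prob p BA + b"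
    by (subst Bochner_Integration.integral_add) (auto intro: measure_pmf.integrable_const_bound[where B=1] simp: indicator_def)
  finally have "measure_pmf.prob (bind_pmf p f) BB \<le> measure_pmf.prob p BA + b"
    using assms(2) by (subst (asm) ennreal_le_iff) auto
  then show ?thesis using assms(1) by simp
qed

lemma exp_neg_bound:
  fixes x :: real assumes "0 \<le> x" "x \<le> 1"
  shows "exp (-x) \<le> 1 - x + x\<^sup>2"
proof -
  have e: "1 + x + x\<^sup>2 / 2 \<le> exp x" using exp_lower_Taylor_quadratic assms by simp
  have eq: "(1 - x + x\<^sup>2) * (1 + x + x\<^sup>2 / 2) = 1 + x\<^sup>2/2 + x^3/2 + x^4/2"
    by (simp add: field_simps power2_eq_square power3_eq_cube power4_eq_xxxx)
  have "1 \<le> (1 - x + x\<^sup>2) * (1 + x + x\<^sup>2 / 2)"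
    unfolding eq using assms by simp
  also have "\<dots> \<le> (1 - x + x\<^sup>2) * exp x"
  proof (rule mult_left_mono[OF e])
    have "x * 1 \<le> 1" using assms by simp
    moreover have "x * x \<ge> 0" using assms by simp
    ultimately show "0 \<le> 1 - x + x\<^sup>2" by (simp add: power2_eq_square)
  qed
  finally show ?thesis by (simp add: exp_minus field_simps)
qed



lemma expectation_if_pmf:
  "measure_pmf.expectation p (\<lambda>v. if P v then a else (1::real)) = 1 + (a - 1) * measure_pmf.prob p {v. P v}"
proof -
  have "(\<lambda>v. if P v then a else (1::real)) = (\<lambda>v. 1 + (a - 1) * indicator {v. P v} v)"
    by (auto simp: indicator_def)
  moreover have "measure_pmf.expectation p (indicator {v. P v}) = measure_pmf.prob p {v. P v}"
    using Bochner_Integration.integral_indicator[of "measure_pmf p" "{v. P v}"] by simp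
  moreover have "integrable (measure_pmf p) (indicator {v. P v} :: _ \<Rightarrow> real)"
    by (rule measure_pmf.integrable_const_bound[where B=1]) (auto simp: indicator_def)
  ultimately show ?thesis
    by (simp only:) (subst Bochner_Integration.integral_add, auto)
qed

lemma card_as_sum: "finite I \<Longrightarrow> real (card {i\<in>I. P i}) = (\<Sum>i\<in>I. if P i then 1 else 0)"
  by (simp add: sum.If_cases Int_def)

lemma mgf_count_Pi:
  assumes "finite I"
  shows "measure_pmf.expectation (Pi_pmf I d p) (\<lambda>y. exp (l * real (card {i\<in>I. f i (y i)})))
     \<le> exp ((\<Sum>i\<in>I. measure_pmf.prob (p i) {v. f i v}) * (exp l - 1))"
proof -
  have "(\<lambda>y. exp (l * real (card {i\<in>I. f i (y i)}))) = (\<lambda>y. \<Prod>i\<in>I. (\<lambda>i v. if f i v then exp l else 1) i (y i))"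
    using assms by (auto simp: card_as_sum sum_distrib_left exp_sum intro!: prod.cong)
  then have "measure_pmf.expectation (Pi_pmf I d p) (\<lambda>y. exp (l * real (card {i\<in>I. f i (y i)})))
     = (\<Prod>i\<in>I. measure_pmf.expectation (p i) (\<lambda>v. if f i v then exp l else 1))"
    using assms by (simp only:) (rule expectation_prod_Pi_pmf, auto intro: measure_pmf.integrable_const_bound[where B="max 1 (exp l)"])
  also have "\<dots> = (\<Prod>i\<in>I. 1 + (exp l - 1) * measure_pmf.prob (p i) {v. f i v})"
    by (simp add: expectation_if_pmf)
  also have "\<dots> \<le> (\<Prod>i\<in>I. exp (measure_pmf.prob (p i) {v. f i v} * (exp l - 1)))"
  proof (rule prod_mono)
    fix i assume "i \<in> I"
    have q: "0 \<le> measure_pmf.prob (p i) {v. f i v}" "measure_pmf.prob (p i) {v. f i v} \<le> 1" by auto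
    have "0 \<le> 1 + (exp l - 1) * measure_pmf.prob (p i) {v. f i v}"
    proof (cases "exp l \<ge> 1")
      case True then show ?thesis using q by simp
    next
      case False
      then have "(exp l - 1) * measure_pmf.prob (p i) {v. f i v} \<ge> (exp l - 1) * 1"
        using q by (intro mult_left_mono_neg) auto
      then have "(exp l - 1) * measure_pmf.prob (p i) {v. f i v} \<ge> exp l - 1" by simp
      then show ?thesis using exp_gt_zero[of l] by linarith
    qed
    then show "0 \<le> 1 + (exp l - 1) * measure_pmf.prob (p i) {v. f i v} \<and>
          1 + (exp l - 1) * measure_pmf.prob (p i) {v. f i v} \<le> exp (measure_pmf.prob (p i) {v. f i v} * (exp l - 1))"
      using exp_ge_add_one_self[of "measure_pmf.prob (p i) {v. f i v} * (exp l - 1)"] by (simp add: mult.commute)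
  qed
  also have "\<dots> = exp ((\<Sum>i\<in>I. measure_pmf.prob (p i) {v. f i v}) * (exp l - 1))"
    using assms by (simp add: exp_sum sum_distrib_right)
  finally show ?thesis .
qed



lemma markov_count_Pi:
  assumes "finite I"
  shows "measure_pmf.prob (Pi_pmf I d p) {y. exp (l * real (card {i\<in>I. f i (y i)})) \<ge> exp (l * c)}
     \<le> exp ((\<Sum>i\<in>I. measure_pmf.prob (p i) {v. f i v}) * (exp l - 1) - l * c)"
proof -
  let ?M = "measure_pmf (Pi_pmf I d p)"
  let ?u = "\<lambda>y. exp (l * real (card {i\<in>I. f i (y i)}))"
  have int: "integrable ?M ?u"
  proof (rule measure_pmf.integrable_const_bound[where B="exp (\<bar>l\<bar> * real (card I))"])
    show "AE x in ?M. norm (?u x) \<le> exp (\<bar>l\<bar> * real (card I))"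
    proof (rule AE_pmfI)
      fix y
      have "card {i\<in>I. f i (y i)} \<le> card I" using assms by (intro card_mono) auto
      then have "l * real (card {i\<in>I. f i (y i)}) \<le> \<bar>l\<bar> * real (card I)"
      proof -
        have "l * real (card {i\<in>I. f i (y i)}) \<le> \<bar>l\<bar> * real (card {i\<in>I. f i (y i)})"
          by (intro mult_right_mono) auto
        also have "\<dots> \<le> \<bar>l\<bar> * real (card I)"
          using \<open>card {i\<in>I. f i (y i)} \<le> card I\<close> by (intro mult_left_mono) auto
        finally show ?thesis .
      qed
      then show "norm (?u y) \<le> exp (\<bar>l\<bar> * real (card I))" by simp
    qed
  qed auto
  have "measure ?M {y \<in> space ?M. ?u y \<ge> exp (l * c)} \<le> measure_pmf.expectation (Pi_pmf I d p) ?u / exp (l * c)"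
    by (rule integral_Markov_inequality_measure[OF int]) auto
  also have "\<dots> \<le> exp ((\<Sum>i\<in>I. measure_pmf.prob (p i) {v. f i v}) * (exp l - 1)) / exp (l * c)"
    by (intro divide_right_mono mgf_count_Pi assms) auto
  also have "\<dots> = exp ((\<Sum>i\<in>I. measure_pmf.prob (p i) {v. f i v}) * (exp l - 1) - l * c)"
    by (simp add: exp_diff)
  finally show ?thesis by simp
qed

lemma chernoff_upper:
  assumes "finite I" and Q: "Q = (\<Sum>i\<in>I. measure_pmf.prob (p i) {v. f i v})" and "Q \<le> m"
    and "0 \<le> \<theta>" "\<theta> \<le> 1"
  shows "measure_pmf.prob (Pi_pmf I d p) {y. real (card {i\<in>I. f i (y i)}) \<ge> Q + \<theta> * m}
     \<le> exp (-(\<theta>\<^sup>2 * m / 4))"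
proof -
  define l where "l = \<theta> / 2"
  have l: "0 \<le> l" "l \<le> 1" using assms by (auto simp: l_def)
  have Q0: "0 \<le> Q" unfolding Q by (intro sum_nonneg) auto
  have "measure_pmf.prob (Pi_pmf I d p) {y. real (card {i\<in>I. f i (y i)}) \<ge> Q + \<theta> * m}
     \<le> measure_pmf.prob (Pi_pmf I d p) {y. exp (l * real (card {i\<in>I. f i (y i)})) \<ge> exp (l * (Q + \<theta> * m))}"
    using l by (intro measure_pmf.finite_measure_mono) (auto intro: mult_left_mono)
  also have "\<dots> \<le> exp (Q * (exp l - 1) - l * (Q + \<theta> * m))"
    unfolding Q by (rule markov_count_Pi[OF assms(1)])
  also have "\<dots> \<le> exp (-(\<theta>\<^sup>2 * m / 4))"
  proof -
    have e1: "exp l \<le> 1 + l + l\<^sup>2" using exp_bound l by simp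
    have e2: "1 + l \<le> exp l" using exp_ge_add_one_self by simp
    have "Q * (exp l - 1 - l) \<le> m * (exp l - 1 - l)"
      using assms(3) e2 by (intro mult_right_mono) linarith+
    also have "\<dots> \<le> m * l\<^sup>2" using e1 Q0 assms(3) by (intro mult_left_mono) auto
    finally have "Q * (exp l - 1) - l * (Q + \<theta> * m) \<le> m * l\<^sup>2 - l * \<theta> * m"
      by (simp add: algebra_simps)
    also have "m * l\<^sup>2 - l * \<theta> * m = -(\<theta>\<^sup>2 * m / 4)"
      by (simp add: l_def power2_eq_square field_simps)
    finally show ?thesis by simp
  qed
  finally show ?thesis .
qed

lemma chernoff_lower:
  assumes "finite I" and Q: "Q = (\<Sum>i\<in>I. measure_pmf.prob (p i) {v. f i v})" and "Q \<le> m"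
    and "0 \<le> \<theta>" "\<theta> \<le> 1"
  shows "measure_pmf.prob (Pi_pmf I d p) {y. real (card {i\<in>I. f i (y i)}) \<le> Q - \<theta> * m}
     \<le> exp (-(\<theta>\<^sup>2 * m / 4))"
proof -
  define l where "l = \<theta> / 2"
  have l: "0 \<le> l" "l \<le> 1" using assms by (auto simp: l_def)
  have Q0: "0 \<le> Q" unfolding Q by (intro sum_nonneg) auto
  have "measure_pmf.prob (Pi_pmf I d p) {y. real (card {i\<in>I. f i (y i)}) \<le> Q - \<theta> * m}
     \<le> measure_pmf.prob (Pi_pmf I d p) {y. exp ((-l) * real (card {i\<in>I. f i (y i)})) \<ge> exp ((-l) * (Q - \<theta> * m))}"
    using l by (intro measure_pmf.finite_measure_mono) (auto intro: mult_left_mono)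
  also have "\<dots> \<le> exp (Q * (exp (-l) - 1) - (-l) * (Q - \<theta> * m))"
    unfolding Q by (rule markov_count_Pi[OF assms(1)])
  also have "\<dots> \<le> exp (-(\<theta>\<^sup>2 * m / 4))"
  proof -
    have e1: "exp (-l) \<le> 1 - l + l\<^sup>2" using exp_neg_bound l by simp
    have e2: "1 + (-l) \<le> exp (-l)" using exp_ge_add_one_self[of "-l"] by linarith
    have "Q * (exp (-l) - 1 + l) \<le> m * (exp (-l) - 1 + l)"
      using assms(3) e2 by (intro mult_right_mono) linarith+
    also have "\<dots> \<le> m * l\<^sup>2" using e1 Q0 assms(3) by (intro mult_left_mono) auto
    finally have "Q * (exp (-l) - 1) - (-l) * (Q - \<theta> * m) \<le> m * l\<^sup>2 - l * \<theta> * m"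
      by (simp add: algebra_simps)
    also have "m * l\<^sup>2 - l * \<theta> * m = -(\<theta>\<^sup>2 * m / 4)"
      by (simp add: l_def power2_eq_square field_simps)
    finally show ?thesis by simp
  qed
  finally show ?thesis .
qed



lemma Qtilde_nonneg: "0 \<le> Qtilde \<epsilon> l" by (simp add: Qtilde_def)

lemma Qhat_nonneg: "0 \<le> Qhat \<epsilon> M \<Lambda> j"
  by (auto simp: Qhat_def Let_def Qtilde_nonneg intro!: divide_nonneg_nonneg sum_nonneg)

lemma Qhat_sum: assumes "M \<ge> 1" shows "(\<Sum>j<M. Qhat \<epsilon> M \<Lambda> j) = 1"
proof (cases "(\<Sum>j'<M. Qtilde \<epsilon> (\<Lambda> j')) = 0")
  case True then show ?thesis using assms by (simp add: Qhat_def)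
next
  case False then show ?thesis by (simp add: Qhat_def sum_divide_distrib[symmetric])
qed

lemma pmf_select:
  assumes "M \<ge> 1" "0 \<le> \<mu>" "\<mu> \<le> 1"
  shows "pmf (select_pmf \<epsilon> \<mu> M \<Lambda>) j = (if j < M then (1 - \<mu>) * Qhat \<epsilon> M \<Lambda> j + \<mu> / real M else 0)"
  unfolding select_pmf_def
proof (rule pmf_embed_pmf)
  fix j show "0 \<le> (if j < M then (1 - \<mu>) * Qhat \<epsilon> M \<Lambda> j + \<mu> / real M else 0)"
    using assms Qhat_nonneg by auto
next
  have "(\<integral>\<^sup>+j. ennreal (if j < M then (1 - \<mu>) * Qhat \<epsilon> M \<Lambda> j + \<mu> / real M else 0) \<partial>count_space UNIV)
     = (\<Sum>j<M. ennreal (if j < M then (1 - \<mu>) * Qhat \<epsilon> M \<Lambda> j + \<mu> / real M else 0))"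
    by (rule nn_integral_count_space') auto
  also have "\<dots> = ennreal (\<Sum>j<M. (1 - \<mu>) * Qhat \<epsilon> M \<Lambda> j + \<mu> / real M)"
    using assms Qhat_nonneg by (subst sum_ennreal[symmetric]) auto
  also have "(\<Sum>j<M. (1 - \<mu>) * Qhat \<epsilon> M \<Lambda> j + \<mu> / real M) = 1"
    using assms by (simp add: sum.distrib sum_distrib_left[symmetric] Qhat_sum)
  finally show "(\<integral>\<^sup>+j. ennreal (if j < M then (1 - \<mu>) * Qhat \<epsilon> M \<Lambda> j + \<mu> / real M else 0) \<partial>count_space UNIV) = 1" by simp
qed

lemma set_select: assumes "M \<ge> 1" "0 \<le> \<mu>" "\<mu> \<le> 1"
  shows "set_pmf (select_pmf \<epsilon> \<mu> M \<Lambda>) \<subseteq> {..<M}"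
  using pmf_select[OF assms] by (auto simp: set_pmf_eq)

lemma set_adopt: assumes "M \<ge> 1" "0 \<le> \<mu>" "\<mu> \<le> 1"
  shows "set_pmf (adopt_pmf \<epsilon> \<mu> \<beta> M \<Phi>r \<Lambda>) \<subseteq> {None} \<union> Some ` {..<M}"
  using set_select[OF assms, of \<epsilon> \<Lambda>] by (fastforce simp: adopt_pmf_def)

lemma expectation_single_pmf:
  "measure_pmf.expectation p (\<lambda>k. if k = j then c else (0::real)) = pmf p j * c"
proof -
  have "(\<lambda>k. if k = j then c else (0::real)) = (\<lambda>k. c * indicator {j} k)"
    by (auto simp: indicator_def)
  moreover have "measure_pmf.expectation p (indicator {j}) = pmf p j"
    using Bochner_Integration.integral_indicator[of "measure_pmf p" "{j}"] by (simp add: measure_pmf_single)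
  ultimately show ?thesis by simp
qed

lemma prob_adopt:
  assumes "M \<ge> 1" "0 \<le> \<mu>" "\<mu> \<le> 1" "0 \<le> \<beta>" "\<beta> \<le> 1" "j < M"
  shows "measure_pmf.prob (adopt_pmf \<epsilon> \<mu> \<beta> M \<Phi>r \<Lambda>) {v. v = Some j}
     = ((1 - \<mu>) * Qhat \<epsilon> M \<Lambda> j + \<mu> / real M) * (if \<Phi>r j then \<beta> else 1 - \<beta>)"
proof -
  have "measure_pmf.prob (adopt_pmf \<epsilon> \<mu> \<beta> M \<Phi>r \<Lambda>) {v. v = Some j} = pmf (adopt_pmf \<epsilon> \<mu> \<beta> M \<Phi>r \<Lambda>) (Some j)"
    by (simp add: measure_pmf_single)
  also have "\<dots> = measure_pmf.expectation (select_pmf \<epsilon> \<mu> M \<Lambda>)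
      (\<lambda>k. if k = j then (if \<Phi>r j then \<beta> else 1 - \<beta>) else 0)"
    unfolding adopt_pmf_def pmf_bind
  proof (rule Bochner_Integration.integral_cong[OF refl])
    fix k
    show "measure_pmf.expectation (bernoulli_pmf (if \<Phi>r k then \<beta> else 1 - \<beta>))
            (\<lambda>x. pmf (return_pmf (if x then Some k else None)) (Some j))
        = (if k = j then (if \<Phi>r j then \<beta> else 1 - \<beta>) else 0)"
      using assms by (auto simp: pmf_bind[symmetric] bind_return_pmf' indicator_def)
  qed
  also have "\<dots> = pmf (select_pmf \<epsilon> \<mu> M \<Lambda>) j * (if \<Phi>r j then \<beta> else 1 - \<beta>)"
    by (rule expectation_single_pmf)
  finally show ?thesis using pmf_select[OF assms(1-3)] assms(6) by simp
qed



lemma Qtilde_err: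
  fixes e l a t q :: real
  assumes "1 < e" "\<bar>l - a\<bar> \<le> t" "(e + 1) / (e - 1) * a - 1 / (e - 1) = q" "0 \<le> q"
  shows "\<bar>max ((e + 1) / (e - 1) * l - 1 / (e - 1)) 0 - q\<bar> \<le> (e + 1) / (e - 1) * t"
proof -
  define k where "k = (e + 1) / (e - 1)"
  have k: "k > 0" unfolding k_def using assms by (intro divide_pos_pos) auto
  have "k * l - 1 / (e - 1) = k * (l - a) + (k * a - 1 / (e - 1))"
    by (simp add: algebra_simps)
  also have "k * a - 1 / (e - 1) = q" using assms(3) by (simp add: k_def)
  finally have "(e + 1) / (e - 1) * l - 1 / (e - 1) = k * (l - a) + q" by (simp add: k_def)
  moreover have "\<bar>k * (l - a)\<bar> \<le> k * t"
    using k assms(2) by (simp add: abs_mult)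
  ultimately have A: "k * l - 1 / (e - 1) = k * (l - a) + q" "\<bar>k * (l - a)\<bar> \<le> k * t" by (auto simp: k_def)
  show ?thesis unfolding k_def[symmetric] A(1)
  proof (cases "k * (l - a) + q \<ge> 0")
    case True
    then have "max (k * (l - a) + q) 0 - q = k * (l - a)" by simp
    then show "\<bar>max (k * (l - a) + q) 0 - q\<bar> \<le> k * t" using A(2) by simp
  next
    case False
    then have "max (k * (l - a) + q) 0 - q = - q" by simp
    moreover have "q \<le> - (k * (l - a))" using False by simp
    moreover have "- (k * (l - a)) \<le> k * t" using A(2) abs_le_D2 by blast
    ultimately show "\<bar>max (k * (l - a) + q) 0 - q\<bar> \<le> k * t" using assms(4) by simp
  qed
qed

lemma Qhat_err:
  assumes M: "M \<ge> 1" and e: "1 < exp (\<epsilon>/2)"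
    and Q0: "\<forall>j<M. 0 \<le> Q j" and Qs: "(\<Sum>j<M. Q j) = 1"
    and La: "\<forall>j<M. \<bar>\<Lambda> j - a j\<bar> \<le> t"
    and aQ: "\<forall>j<M. (exp (\<epsilon>/2) + 1) / (exp (\<epsilon>/2) - 1) * a j - 1 / (exp (\<epsilon>/2) - 1) = Q j"
    and small: "real M * ((exp (\<epsilon>/2) + 1) / (exp (\<epsilon>/2) - 1) * t) \<le> 1/2"
    and j: "j < M"
  shows "\<bar>Qhat \<epsilon> M \<Lambda> j - Q j\<bar> \<le> 2 * (real M + 1) * ((exp (\<epsilon>/2) + 1) / (exp (\<epsilon>/2) - 1) * t)"
proof -
  define k where "k = (exp (\<epsilon>/2) + 1) / (exp (\<epsilon>/2) - 1) * t"
  have err: "\<bar>Qtilde \<epsilon> (\<Lambda> j) - Q j\<bar> \<le> k" if "j < M" for j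
    unfolding Qtilde_def k_def using Qtilde_err[OF e] La aQ Q0 that by blast
  have Q1: "Q j \<le> 1" if "j < M" for j
  proof -
    have "Q j \<le> (\<Sum>j<M. Q j)" using that Q0 by (intro member_le_sum) auto
    then show ?thesis using Qs by simp
  qed
  define S where "S = (\<Sum>j'<M. Qtilde \<epsilon> (\<Lambda> j'))"
  have "\<bar>S - 1\<bar> = \<bar>\<Sum>j'<M. (Qtilde \<epsilon> (\<Lambda> j') - Q j')\<bar>"
    by (simp add: S_def sum_subtractf Qs)
  also have "\<dots> \<le> (\<Sum>j'<M. \<bar>Qtilde \<epsilon> (\<Lambda> j') - Q j'\<bar>)" by (rule sum_abs)
  also have "\<dots> \<le> (\<Sum>j'<M. k)" using err by (intro sum_mono) auto
  finally have S1: "\<bar>S - 1\<bar> \<le> real M * k" by simp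
  have Mk: "real M * k \<le> 1/2" using small by (simp add: k_def)
  from S1 have "1 - S \<le> real M * k" by (simp add: abs_le_iff)
  then have S2: "S \<ge> 1/2" using Mk by linarith
  have "Qhat \<epsilon> M \<Lambda> j = Qtilde \<epsilon> (\<Lambda> j) / S"
    using S2 by (simp add: Qhat_def S_def Let_def)
  moreover have "((Qtilde \<epsilon> (\<Lambda> j) - Q j) + Q j * (1 - S)) / S = (Qtilde \<epsilon> (\<Lambda> j) - Q j * S) / S"
    by (simp add: algebra_simps)
  moreover have "(Qtilde \<epsilon> (\<Lambda> j) - Q j * S) / S = Qtilde \<epsilon> (\<Lambda> j) / S - Q j"
    using S2 by (simp add: diff_divide_distrib)
  ultimately have "Qhat \<epsilon> M \<Lambda> j - Q j = ((Qtilde \<epsilon> (\<Lambda> j) - Q j) + Q j * (1 - S)) / S"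
    by simp
  moreover have "\<bar>(Qtilde \<epsilon> (\<Lambda> j) - Q j) + Q j * (1 - S)\<bar> \<le> k + real M * k"
  proof -
    have "\<bar>Q j * (1 - S)\<bar> \<le> 1 * (real M * k)"
      unfolding abs_mult using Q0 Q1 j S1 by (intro mult_mono) auto
    then show ?thesis using err[OF j] by simp
  qed
  moreover have "\<bar>((Qtilde \<epsilon> (\<Lambda> j) - Q j) + Q j * (1 - S)) / S\<bar> = \<bar>(Qtilde \<epsilon> (\<Lambda> j) - Q j) + Q j * (1 - S)\<bar> / S"
    using S2 by simp
  moreover have "\<bar>(Qtilde \<epsilon> (\<Lambda> j) - Q j) + Q j * (1 - S)\<bar> / S \<le> (k + real M * k) / S"
    using S2 \<open>\<bar>(Qtilde \<epsilon> (\<Lambda> j) - Q j) + Q j * (1 - S)\<bar> \<le> k + real M * k\<close> by (intro divide_right_mono) auto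
  ultimately have "\<bar>Qhat \<epsilon> M \<Lambda> j - Q j\<bar> \<le> (k + real M * k) / S"
    using S2 by (simp add: abs_of_pos)
  also have "\<dots> \<le> (k + real M * k) / (1/2)"
    using S2 err[OF j] by (intro divide_left_mono) auto
  also have "(k + real M * k) / (1/2) = 2 * (real M + 1) * k" by (simp add: algebra_simps)
  finally show ?thesis unfolding k_def[symmetric] .
qed

lemma W_pos:
  assumes "0 < \<mu>" "\<mu> < 1" "0 < \<beta>" "\<beta> < 1" "M \<ge> 1"
  shows "W \<mu> \<beta> M \<Phi> r j > 0"
proof (induction r arbitrary: j)
  case 0 then show ?case by simp
next
  case (Suc r)
  have "(\<Sum>k<M. W \<mu> \<beta> M \<Phi> r k) \<ge> 0" using Suc by (intro sum_nonneg) (auto intro: less_imp_le)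
  then have "(1 - \<mu>) * W \<mu> \<beta> M \<Phi> r j + \<mu> / real M * (\<Sum>k<M. W \<mu> \<beta> M \<Phi> r k) > 0"
    using Suc[of j] assms by (intro add_pos_nonneg) auto
  then show ?case using assms by simp
qed

lemma Wsum_pos:
  assumes "0 < \<mu>" "\<mu> < 1" "0 < \<beta>" "\<beta> < 1" "M \<ge> 1"
  shows "(\<Sum>k<M. W \<mu> \<beta> M \<Phi> r k) > 0"
proof -
  have "0 \<in> {..<M}" using assms(5) by auto
  then have "{..<M} \<noteq> {}" by blast
  then show ?thesis using W_pos[OF assms] by (intro sum_pos) auto
qed

lemma Pw_pos:
  assumes "0 < \<mu>" "\<mu> < 1" "0 < \<beta>" "\<beta> < 1" "M \<ge> 1"
  shows "Pw \<mu> \<beta> M \<Phi> r j > 0"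
  using W_pos[OF assms] Wsum_pos[OF assms] by (simp add: Pw_def)

lemma Pw_sum:
  assumes "0 < \<mu>" "\<mu> < 1" "0 < \<beta>" "\<beta> < 1" "M \<ge> 1"
  shows "(\<Sum>j<M. Pw \<mu> \<beta> M \<Phi> r j) = 1"
  using Wsum_pos[OF assms, of \<Phi> r] by (simp add: Pw_def sum_divide_distrib[symmetric])

lemma Pw_0: "Pw \<mu> \<beta> M \<Phi> 0 j = 1 / real M"
  by (simp add: Pw_def)

lemma Pw_Suc:
  assumes "0 < \<mu>" "\<mu> < 1" "0 < \<beta>" "\<beta> < 1" "M \<ge> 1"
  shows "Pw \<mu> \<beta> M \<Phi> (Suc r) j =
    ((1 - \<mu>) * Pw \<mu> \<beta> M \<Phi> r j + \<mu> / real M) * (if \<Phi> (Suc r) j then \<beta> else 1 - \<beta>)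
    / (\<Sum>k<M. ((1 - \<mu>) * Pw \<mu> \<beta> M \<Phi> r k + \<mu> / real M) * (if \<Phi> (Suc r) k then \<beta> else 1 - \<beta>))"
proof -
  define S where "S = (\<Sum>k<M. W \<mu> \<beta> M \<Phi> r k)"
  have S: "S > 0" using Wsum_pos[OF assms] by (simp add: S_def)
  have W: "W \<mu> \<beta> M \<Phi> (Suc r) k = S * (((1 - \<mu>) * Pw \<mu> \<beta> M \<Phi> r k + \<mu> / real M) * (if \<Phi> (Suc r) k then \<beta> else 1 - \<beta>))" for k
    using S by (simp add: Pw_def S_def[symmetric] field_simps)
  show ?thesis
    unfolding Pw_def[of _ _ _ _ "Suc r"] W using S by (simp add: sum_distrib_left[symmetric])
qed

lemma pow_bound:
  fixes x :: real assumes "0 \<le> x" "x \<le> 1"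
  shows "(1 + x) ^ r \<le> 1 + 5 ^ r * x / 5"
proof (induction r)
  case 0 then show ?case using assms by simp
next
  case (Suc r)
  show ?case
  proof (cases "r = 0")
    case True then show ?thesis by simp
  next
    case False
    have "(5::real) ^ 1 \<le> 5 ^ r" using False by (intro power_increasing) auto
    then have p5: "(5::real) ^ r \<ge> 5" by simp
    have "(1 + x) ^ Suc r = (1 + x) * (1 + x) ^ r" by simp
    also have "\<dots> \<le> (1 + x) * (1 + 5 ^ r * x / 5)"
      using Suc assms by (intro mult_left_mono) auto
    also have "\<dots> = 1 + x + 5 ^ r * x / 5 + 5 ^ r * (x * x) / 5" by (simp add: algebra_simps)
    also have "\<dots> \<le> 1 + x + 5 ^ r * x / 5 + 5 ^ r * x / 5"
      using assms by (simp add: mult_left_le)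
    also have "\<dots> \<le> 1 + 5 ^ Suc r * x / 5"
    proof -
      have "5 * x \<le> 5 ^ r * x" using p5 assms by (intro mult_right_mono) auto
      moreover have "(5::real) ^ Suc r * x / 5 = 5 ^ r * x" by simp
      moreover have "0 \<le> (5::real) ^ r * x" using assms by simp
      ultimately show ?thesis by linarith
    qed
    finally show ?thesis .
  qed
qed

lemma card_partition_opt:
  fixes N M :: nat and x :: "nat \<Rightarrow> nat option"
  assumes "\<forall>i j. x i = Some j \<longrightarrow> j < M"
  shows "(\<Sum>j<M. card {i. i < N \<and> x i = Some j}) = card {i. i < N \<and> x i \<noteq> None}"
proof -
  have "{i. i < N \<and> x i \<noteq> None} = (\<Union>j<M. {i. i < N \<and> x i = Some j})"
    using assms by auto
  moreover have fin: "\<And>P. finite {i. i < N \<and> P i}"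
    by (rule finite_subset[of _ "{..<N}"]) auto
  moreover have "card (\<Union>j<M. {i. i < N \<and> x i = Some j}) = (\<Sum>j<M. card {i. i < N \<and> x i = Some j})"
    by (rule card_UN_disjoint) (auto simp: fin)
  ultimately show ?thesis by simp
qed

lemma pop_sum:
  fixes N M :: nat and x :: "nat \<Rightarrow> nat option"
  assumes "\<forall>i j. x i = Some j \<longrightarrow> j < M" "M \<ge> 1" "r > 0 \<longrightarrow> card {i. i < N \<and> x i \<noteq> None} > 0"
  shows "(\<Sum>j<M. popularity N M r x j) = 1"
proof (cases "r = 0")
  case True then show ?thesis using assms by (simp add: popularity_def)
next
  case False
  then have pos: "real (card {i. i < N \<and> x i \<noteq> None}) > 0" using assms by simp
  have "(\<Sum>j<M. popularity N M r x j) = (\<Sum>j<M. real (card {i. i < N \<and> x i = Some j})) / real (card {i. i < N \<and> x i \<noteq> None})"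
    using False by (simp add: popularity_def sum_divide_distrib[symmetric])
  also have "(\<Sum>j<M. real (card {i. i < N \<and> x i = Some j})) = real (card {i. i < N \<and> x i \<noteq> None})"
    using card_partition_opt[OF assms(1), of N] by (simp flip: of_nat_sum)
  also have "real (card {i. i < N \<and> x i \<noteq> None}) / real (card {i. i < N \<and> x i \<noteq> None}) = 1"
    using pos by (intro divide_self) linarith
  finally show ?thesis .
qed



lemma chernoff_abs:
  assumes "finite I" and Q: "Q = (\<Sum>i\<in>I. measure_pmf.prob (p i) {v. f i v})" and "Q \<le> m"
    and "0 \<le> \<theta>" "\<theta> \<le> 1"
  shows "measure_pmf.prob (Pi_pmf I d p) {y. \<theta> * m < \<bar>real (card {i\<in>I. f i (y i)}) - Q\<bar>}
     \<le> 2 * exp (-(\<theta>\<^sup>2 * m / 4))"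
proof -
  have "{y. \<theta> * m < \<bar>real (card {i\<in>I. f i (y i)}) - Q\<bar>} \<subseteq>
        {y. real (card {i\<in>I. f i (y i)}) \<ge> Q + \<theta> * m} \<union> {y. real (card {i\<in>I. f i (y i)}) \<le> Q - \<theta> * m}"
    by auto
  then have "measure_pmf.prob (Pi_pmf I d p) {y. \<theta> * m < \<bar>real (card {i\<in>I. f i (y i)}) - Q\<bar>}
     \<le> measure_pmf.prob (Pi_pmf I d p) ({y. real (card {i\<in>I. f i (y i)}) \<ge> Q + \<theta> * m} \<union> {y. real (card {i\<in>I. f i (y i)}) \<le> Q - \<theta> * m})"
    by (intro measure_pmf.finite_measure_mono) auto
  also have "\<dots> \<le> measure_pmf.prob (Pi_pmf I d p) {y. real (card {i\<in>I. f i (y i)}) \<ge> Q + \<theta> * m}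
      + measure_pmf.prob (Pi_pmf I d p) {y. real (card {i\<in>I. f i (y i)}) \<le> Q - \<theta> * m}"
    by (rule measure_Un_le) auto
  also have "\<dots> \<le> exp (-(\<theta>\<^sup>2 * m / 4)) + exp (-(\<theta>\<^sup>2 * m / 4))"
    by (intro add_mono chernoff_upper[OF assms] chernoff_lower[OF assms])
  finally show ?thesis by simp
qed

lemma union_bound_pmf:
  assumes "finite I"
  shows "measure_pmf.prob p (\<Union>i\<in>I. B i) \<le> (\<Sum>i\<in>I. measure_pmf.prob p (B i))"
  using measure_pmf.finite_measure_subadditive_finite[OF assms, of B p] by auto

locale rsetup =
  fixes E :: "nat \<Rightarrow> nat \<Rightarrow> bool" and N L K M :: nat and \<epsilon> \<mu> \<beta> s \<kappa> :: real
  assumes M1: "M \<ge> 1" and eps: "\<epsilon> > 0" and mu0: "0 < \<mu>" and mu1: "\<mu> < 1"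
    and b0: "1/2 < \<beta>" and b1: "\<beta> < 1" and N3: "N \<ge> 3"
    and walk: "good_walk_length E N L"
    and kappa: "\<kappa> = (exp (\<epsilon>/2) + 1) / (exp (\<epsilon>/2) - 1)"
    and s0: "s > 0" and sA: "s \<le> 1/4" and sB: "6 * real M * \<kappa> * s \<le> 1/2"
    and sC: "12 * real M * (real M + 1) * \<kappa> * s / \<mu> \<le> 1/4"
    and sD: "s * real M / (\<mu> * (1 - \<beta>)) \<le> 1/4"
    and sE: "5 * (4 * real M * (2 * real M + 1) / (\<mu> * (1 - \<beta>)) * \<kappa>) * s \<le> 1"
    and N2: "4 / (real N)\<^sup>2 \<le> s"
    and tailN: "exp (-(s\<^sup>2 * (real N * (1 - \<beta>) / 2) / 4)) \<le> 1 / real N ^ 11"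
    and tailK: "exp (-(s\<^sup>2 * ((1 - \<beta>) / 2 * real K) / 8)) \<le> 1 / real N ^ 11"
begin

definition "mm = \<mu> / real M"
definition "tt = 5 * s + 4 / (real N)\<^sup>2"
definition "\<tau> = 2 * (real M + 1) * (\<kappa> * tt)"
definition "uu = \<tau> / mm"
definition "vv = s / (mm * (1 - \<beta>))"
definition "FF = (1 + uu) * (1 + vv) / ((1 - uu) * (1 - vv))"

definition "pop r x j = popularity N M r x j"
definition "Dc x = card {i. i < N \<and> x i \<noteq> None}"

definition G :: "(nat \<Rightarrow> nat \<Rightarrow> bool) \<Rightarrow> nat \<Rightarrow> (nat \<Rightarrow> nat option) \<Rightarrow> bool" where
  "G \<Phi> r x \<longleftrightarrow> (\<forall>i j. x i = Some j \<longrightarrow> j < M) \<and> (r = 0 \<longrightarrow> x = (\<lambda>_. None))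
     \<and> (r > 0 \<longrightarrow> real (Dc x) \<ge> real N * (1 - \<beta>) / 2)
     \<and> (\<exists>Lo Up. 0 < Lo \<and> Up \<le> FF ^ r * Lo \<and>
          (\<forall>j<M. Lo * Pw \<mu> \<beta> M \<Phi> r j \<le> pop r x j \<and> pop r x j \<le> Up * Pw \<mu> \<beta> M \<Phi> r j))"

lemma kappa_pos: "\<kappa> > 0"
proof -
  have "exp (\<epsilon>/2) > 1" using eps by simp
  then have "exp (\<epsilon>/2) + 1 > 0" "exp (\<epsilon>/2) - 1 > 0" by linarith+
  then show ?thesis unfolding kappa by (rule divide_pos_pos)
qed

lemma kappa_ge1: "\<kappa> \<ge> 1"
proof -
  have "exp (\<epsilon>/2) > 1" using eps by simp
  then have "exp (\<epsilon>/2) - 1 > 0" by simp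
  then show ?thesis unfolding kappa by (simp add: le_divide_eq)
qed

lemma N_pos: "real N > 0" using N3 by simp

lemma invN2: "1 / (real N)\<^sup>2 \<le> s / 4" using N2 by simp

lemma tt_le: "tt \<le> 6 * s" using N2 by (simp add: tt_def)

lemma tt_nonneg: "tt \<ge> 0" using s0 by (simp add: tt_def)

lemma mm_pos: "mm > 0" using mu0 M1 by (simp add: mm_def)

lemma tau_nonneg: "\<tau> \<ge> 0" using tt_nonneg kappa_pos by (simp add: \<tau>_def)

lemma uu_bound: "0 \<le> uu" "uu \<le> 1/4"
proof -
  show "0 \<le> uu" using tau_nonneg mm_pos by (simp add: uu_def)
  have "uu = 2 * (real M + 1) * (\<kappa> * tt) * real M / \<mu>"
    using M1 by (simp add: uu_def \<tau>_def mm_def)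
  also have "\<dots> \<le> 2 * (real M + 1) * (\<kappa> * (6 * s)) * real M / \<mu>"
    using tt_le kappa_pos mu0 by (intro divide_right_mono mult_right_mono mult_left_mono) auto
  also have "\<dots> = 12 * real M * (real M + 1) * \<kappa> * s / \<mu>" by simp
  finally show "uu \<le> 1/4" using sC by simp
qed

lemma vv_bound: "0 \<le> vv" "vv \<le> 1/4"
proof -
  show "0 \<le> vv" using s0 mm_pos b1 by (simp add: vv_def)
  have "vv = s * real M / (\<mu> * (1 - \<beta>))" using M1 by (simp add: vv_def mm_def)
  then show "vv \<le> 1/4" using sD by simp
qed

lemma FF_pos: "FF > 0"
  using uu_bound vv_bound by (simp add: FF_def)

lemma Ms_small: "real M * s \<le> (1 - \<beta>) / 2"
proof -
  have "s * real M \<le> \<mu> * (1 - \<beta>) / 4" using sD mu0 b1 by (simp add: field_simps)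
  also have "\<dots> \<le> (1 - \<beta>) / 2"
  proof -
    have "\<mu> * (1 - \<beta>) \<le> 1 * (1 - \<beta>)" using mu1 b1 by (intro mult_right_mono) auto
    then have h: "\<mu> * (1 - \<beta>) \<le> 1 - \<beta>" by simp
    have "\<mu> * (1 - \<beta>) / 4 \<le> (1 - \<beta>) / 4" using h by (rule divide_right_mono) simp
    also have "(1 - \<beta>) / 4 \<le> (1 - \<beta>) / 2" using b1 by simp
    finally show ?thesis .
  qed
  finally show ?thesis by (simp add: mult.commute)
qed

end



lemma box_LU:
  fixes P Q :: "nat \<Rightarrow> real"
  assumes "\<forall>j<M. Lo * P j \<le> Q j \<and> Q j \<le> Up * P j" "(\<Sum>j<M. P j) = 1" "(\<Sum>j<M. Q j) = 1"
  shows "Lo \<le> 1" "1 \<le> Up"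
proof -
  have "(\<Sum>j<M. Lo * P j) \<le> (\<Sum>j<M. Q j)" using assms(1) by (intro sum_mono) auto
  then show "Lo \<le> 1" using assms(2,3) by (simp add: sum_distrib_left[symmetric])
  have "(\<Sum>j<M. Q j) \<le> (\<Sum>j<M. Up * P j)" using assms(1) by (intro sum_mono) auto
  then show "1 \<le> Up" using assms(2,3) by (simp add: sum_distrib_left[symmetric])
qed

lemma reorg_lemma:
  fixes A N Z D P :: real
  assumes "Z > 0"
  shows "A * (N * Z / D) * (P / Z) = N * (A * P) / D"
  using assms by (simp add: field_simps)

context rsetup begin

lemma Pw_pos': "Pw \<mu> \<beta> M \<Phi> r j > 0"
  using Pw_pos[of \<mu> \<beta> M] mu0 mu1 b0 b1 M1 by auto

lemma Pw_sum': "(\<Sum>j<M. Pw \<mu> \<beta> M \<Phi> r j) = 1"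
  using Pw_sum[of \<mu> \<beta> M] mu0 mu1 b0 b1 M1 by auto

lemma G_facts:
  assumes "G \<Phi> r x"
  shows "\<forall>i j. x i = Some j \<longrightarrow> j < M" "(\<Sum>j<M. pop r x j) = 1" "\<And>j. 0 \<le> pop r x j"
proof -
  show supp: "\<forall>i j. x i = Some j \<longrightarrow> j < M" using assms by (simp add: G_def)
  have "r > 0 \<longrightarrow> card {i. i < N \<and> x i \<noteq> None} > 0"
  proof
    assume "r > 0"
    then have "real (Dc x) \<ge> real N * (1 - \<beta>) / 2" using assms by (simp add: G_def)
    moreover have "real N * (1 - \<beta>) / 2 > 0" using N_pos b1 by simp
    ultimately show "card {i. i < N \<and> x i \<noteq> None} > 0" by (simp add: Dc_def)
  qed
  then show "(\<Sum>j<M. pop r x j) = 1" unfolding pop_def using pop_sum[OF supp M1] by blast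
  show "\<And>j. 0 \<le> pop r x j" by (simp add: pop_def popularity_def)
qed

lemma G_box:
  assumes "G \<Phi> r x"
  obtains Lo Up where "0 < Lo" "Up \<le> FF ^ r * Lo" "Lo \<le> 1" "1 \<le> Up"
    "\<forall>j<M. Lo * Pw \<mu> \<beta> M \<Phi> r j \<le> pop r x j \<and> pop r x j \<le> Up * Pw \<mu> \<beta> M \<Phi> r j"
proof -
  obtain Lo Up where b: "0 < Lo" "Up \<le> FF ^ r * Lo"
    "\<forall>j<M. Lo * Pw \<mu> \<beta> M \<Phi> r j \<le> pop r x j \<and> pop r x j \<le> Up * Pw \<mu> \<beta> M \<Phi> r j"
    using assms by (auto simp: G_def)
  have "Lo \<le> 1" "1 \<le> Up" using box_LU[OF b(3) Pw_sum' G_facts(2)[OF assms]] by auto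
  then show ?thesis using that b by blast
qed

lemma stage3_det:
  fixes \<Lambda>s :: "nat \<Rightarrow> nat \<Rightarrow> real" and y x :: "nat \<Rightarrow> nat option" and \<Phi> :: "nat \<Rightarrow> nat \<Rightarrow> bool" and r :: nat
  defines "b \<equiv> \<lambda>j. if \<Phi> (Suc r) j then \<beta> else 1 - \<beta>"
  defines "sel \<equiv> \<lambda>i j. (1 - \<mu>) * Qhat \<epsilon> M (\<Lambda>s i) j + \<mu> / real M"
  assumes Gx: "G \<Phi> r x"
    and err: "\<forall>i<N. \<forall>j<M. \<bar>Qhat \<epsilon> M (\<Lambda>s i) j - pop r x j\<bar> \<le> \<tau>"
    and suppy: "\<forall>i j. y i = Some j \<longrightarrow> j < M"
    and conc: "\<forall>j<M. \<bar>real (card {i. i < N \<and> y i = Some j}) - (\<Sum>i<N. sel i j * b j)\<bar> \<le> s * real N"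
  shows "G \<Phi> (Suc r) y"
proof -
  obtain Lo Up where box: "0 < Lo" "Up \<le> FF ^ r * Lo" "Lo \<le> 1" "1 \<le> Up"
    "\<forall>j<M. Lo * Pw \<mu> \<beta> M \<Phi> r j \<le> pop r x j \<and> pop r x j \<le> Up * Pw \<mu> \<beta> M \<Phi> r j"
    using G_box[OF Gx] by blast
  define mixQ where "mixQ j = (1 - \<mu>) * pop r x j + mm" for j
  define mixP where "mixP j = (1 - \<mu>) * Pw \<mu> \<beta> M \<Phi> r j + mm" for j
  define X where "X j = real (card {i. i < N \<and> y i = Some j})" for j
  define Qp where "Qp j = (\<Sum>i<N. sel i j * b j)" for j
  have mmM: "\<mu> / real M = mm" by (simp add: mm_def)
  have pop0: "0 \<le> pop r x j" for j using G_facts(3)[OF Gx] .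
  have b_bounds: "1 - \<beta> \<le> b j" "b j \<le> 1" "0 < b j" for j using b0 b1 by (auto simp: b_def)
  have b_nn: "0 \<le> b j" for j using b_bounds(3)[of j] by simp
  have mixQ_ge: "mixQ j \<ge> mm" for j using pop0[of j] mu1 by (simp add: mixQ_def)
  have mixP_pos: "mixP j > 0" for j using Pw_pos'[of \<Phi> r j] mu1 mm_pos by (simp add: mixP_def add_pos_nonneg)
  have selb: "(1 - uu) * mixQ j \<le> sel i j \<and> sel i j \<le> (1 + uu) * mixQ j" if "i < N" "j < M" for i j
  proof -
    have "sel i j - mixQ j = (1 - \<mu>) * (Qhat \<epsilon> M (\<Lambda>s i) j - pop r x j)"
      by (simp add: sel_def mixQ_def mmM algebra_simps)
    then have "\<bar>sel i j - mixQ j\<bar> = (1 - \<mu>) * \<bar>Qhat \<epsilon> M (\<Lambda>s i) j - pop r x j\<bar>"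
      using mu1 by (simp add: abs_mult)
    also have "\<dots> \<le> 1 * \<tau>" using err that mu0 mu1 by (intro mult_mono) auto
    also have "\<dots> = uu * mm" using mm_pos by (simp add: uu_def)
    also have "\<dots> \<le> uu * mixQ j" using uu_bound mixQ_ge by (intro mult_left_mono) auto
    finally have "\<bar>sel i j - mixQ j\<bar> \<le> uu * mixQ j" .
    then show ?thesis by (simp add: algebra_simps abs_le_iff)
  qed
  have mixb: "Lo * mixP j \<le> mixQ j \<and> mixQ j \<le> Up * mixP j" if "j < M" for j
  proof -
    have p: "Lo * Pw \<mu> \<beta> M \<Phi> r j \<le> pop r x j" "pop r x j \<le> Up * Pw \<mu> \<beta> M \<Phi> r j"
      using box(5) that by auto
    have "Lo * mixP j = (1 - \<mu>) * (Lo * Pw \<mu> \<beta> M \<Phi> r j) + Lo * mm" by (simp add: mixP_def algebra_simps)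
    also have "\<dots> \<le> (1 - \<mu>) * pop r x j + 1 * mm"
      using p mu1 box(3) mm_pos by (intro add_mono mult_left_mono mult_right_mono) auto
    finally have 1: "Lo * mixP j \<le> mixQ j" by (simp add: mixQ_def)
    have "mixQ j \<le> (1 - \<mu>) * (Up * Pw \<mu> \<beta> M \<Phi> r j) + Up * mm"
      unfolding mixQ_def using p mu1 box(4) mm_pos by (intro add_mono mult_left_mono) auto
    also have "\<dots> = Up * mixP j" by (simp add: mixP_def algebra_simps)
    finally show ?thesis using 1 by simp
  qed
  have Qpb: "real N * ((1 - uu) * Lo * mixP j * b j) \<le> Qp j \<and> Qp j \<le> real N * ((1 + uu) * Up * mixP j * b j)"
    if "j < M" for j
  proof -
    have lo: "(1 - uu) * Lo * mixP j * b j \<le> sel i j * b j" if "i < N" for i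
    proof -
      have "(1 - uu) * Lo * mixP j = (1 - uu) * (Lo * mixP j)" by simp
      also have "\<dots> \<le> (1 - uu) * mixQ j" using mixb[OF \<open>j < M\<close>] uu_bound by (intro mult_left_mono) auto
      also have "\<dots> \<le> sel i j" using selb[OF that \<open>j < M\<close>] by simp
      finally show ?thesis using b_nn by (intro mult_right_mono) auto
    qed
    have hi: "sel i j * b j \<le> (1 + uu) * Up * mixP j * b j" if "i < N" for i
    proof -
      have "sel i j \<le> (1 + uu) * mixQ j" using selb[OF that \<open>j < M\<close>] by simp
      also have "\<dots> \<le> (1 + uu) * (Up * mixP j)" using mixb[OF \<open>j < M\<close>] uu_bound by (intro mult_left_mono) auto
      finally show ?thesis using b_nn by (intro mult_right_mono) (auto simp: mult.assoc)
    qed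
    have "(\<Sum>i<N. (1 - uu) * Lo * mixP j * b j) \<le> Qp j" unfolding Qp_def using lo by (intro sum_mono) auto
    moreover have "Qp j \<le> (\<Sum>i<N. (1 + uu) * Up * mixP j * b j)" unfolding Qp_def using hi by (intro sum_mono) auto
    ultimately show ?thesis by simp
  qed
  have sel_ge: "sel i j \<ge> mm" for i j
    using Qhat_nonneg[of \<epsilon> M "\<Lambda>s i" j] mu1 by (simp add: sel_def mmM)
  have sel_nn: "0 \<le> sel i j" for i j using sel_ge[of i j] mm_pos by simp
  have Qp_ge: "Qp j \<ge> real N * (mm * (1 - \<beta>))" for j
  proof -
    have "(\<Sum>i<N. mm * (1 - \<beta>)) \<le> Qp j" unfolding Qp_def
      using sel_ge b_bounds(1) sel_nn b1 by (intro sum_mono mult_mono) auto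
    then show ?thesis by simp
  qed
  \<comment> \<open>(e) concentration as relative error\<close>
  have sN: "s * real N \<le> vv * Qp j" for j
  proof -
    have "s * real N = vv * (real N * (mm * (1 - \<beta>)))" using mm_pos b1 by (simp add: vv_def)
    also have "\<dots> \<le> vv * Qp j" using Qp_ge vv_bound by (intro mult_left_mono) auto
    finally show ?thesis .
  qed
  have Xb: "(1 - vv) * Qp j \<le> X j \<and> X j \<le> (1 + vv) * Qp j" if "j < M" for j
    using conc that sN[of j] unfolding X_def Qp_def[symmetric] by (auto simp: algebra_simps abs_le_iff)
  have Dsum: "real (Dc y) = (\<Sum>j<M. X j)"
  proof -
    have "real (\<Sum>j<M. card {i. i < N \<and> y i = Some j}) = (\<Sum>j<M. real (card {i. i < N \<and> y i = Some j}))"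
      by (rule of_nat_sum)
    then show ?thesis unfolding Dc_def X_def using card_partition_opt[OF suppy, of N] by metis
  qed
  have selsum: "(\<Sum>j<M. sel i j) = 1" for i
  proof -
    have "(\<Sum>j<M. sel i j) = (1 - \<mu>) * (\<Sum>j<M. Qhat \<epsilon> M (\<Lambda>s i) j) + real M * (\<mu> / real M)"
      unfolding sel_def by (simp add: sum.distrib sum_distrib_left)
    also have "\<dots> = 1" using Qhat_sum[OF M1] M1 by simp
    finally show ?thesis .
  qed
  have "(\<Sum>j<M. Qp j) \<ge> real N * (1 - \<beta>)"
  proof -
    have "(\<Sum>j<M. Qp j) = (\<Sum>i<N. \<Sum>j<M. sel i j * b j)" unfolding Qp_def by (rule sum.swap)
    also have "\<dots> \<ge> (\<Sum>i<N. \<Sum>j<M. sel i j * (1 - \<beta>))"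
      using b_bounds(1) sel_nn by (intro sum_mono mult_left_mono) auto
    also have "(\<Sum>i<N. \<Sum>j<M. sel i j * (1 - \<beta>)) = real N * (1 - \<beta>)"
      by (simp add: sum_distrib_right[symmetric] selsum)
    finally show ?thesis .
  qed
  moreover have "(\<Sum>j<M. Qp j) - real M * (s * real N) \<le> (\<Sum>j<M. X j)"
  proof -
    have "(\<Sum>j<M. Qp j - s * real N) \<le> (\<Sum>j<M. X j)"
      using conc unfolding X_def Qp_def by (intro sum_mono) (auto simp: abs_le_iff)
    then show ?thesis by (simp add: sum_subtractf)
  qed
  moreover have "real M * (s * real N) \<le> (1 - \<beta>) / 2 * real N"
    using Ms_small N_pos by (simp add: mult.assoc[symmetric] mult_right_mono)
  moreover have "(1 - \<beta>) / 2 * real N = real N * (1 - \<beta>) / 2" by simp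
  ultimately have Dy: "real (Dc y) \<ge> real N * (1 - \<beta>) / 2" unfolding Dsum by linarith
  have "real N * (1 - \<beta>) / 2 > 0" using N_pos b1 by simp
  then have Dy_pos: "real (Dc y) > 0" using Dy by linarith
  define Z where "Z = (\<Sum>k<M. mixP k * b k)"
  have Z_pos: "Z > 0"
  proof -
    have "0 \<in> {..<M}" using M1 by simp
    then have "{..<M} \<noteq> {}" by blast
    then show ?thesis unfolding Z_def using mixP_pos b_bounds by (intro sum_pos mult_pos_pos) auto
  qed
  have Pw1: "Pw \<mu> \<beta> M \<Phi> (Suc r) j = mixP j * b j / Z" for j
    unfolding Z_def mixP_def b_def mmM[symmetric]
    using Pw_Suc[of \<mu> \<beta> M \<Phi> r j] mu0 mu1 b0 b1 M1 by auto
  have pop1: "pop (Suc r) y j = X j / real (Dc y)" for j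
    by (simp add: pop_def popularity_def X_def Dc_def)
  define c0 where "c0 = real N * Z / real (Dc y)"
  have c0_pos: "c0 > 0" using N_pos Z_pos Dy_pos by (simp add: c0_def)
  define Lo' where "Lo' = (1 - vv) * (1 - uu) * Lo * c0"
  define Up' where "Up' = (1 + vv) * (1 + uu) * Up * c0"
  have Lo'_pos: "Lo' > 0" using uu_bound vv_bound box(1) c0_pos by (simp add: Lo'_def)
  have newbox: "Lo' * Pw \<mu> \<beta> M \<Phi> (Suc r) j \<le> pop (Suc r) y j \<and> pop (Suc r) y j \<le> Up' * Pw \<mu> \<beta> M \<Phi> (Suc r) j"
    if "j < M" for j
  proof -
    have e1: "Lo' * Pw \<mu> \<beta> M \<Phi> (Suc r) j = (1 - vv) * (real N * ((1 - uu) * Lo * mixP j * b j)) / real (Dc y)"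
      unfolding Lo'_def c0_def Pw1 using Z_pos by (simp add: reorg_lemma)
    have e2: "Up' * Pw \<mu> \<beta> M \<Phi> (Suc r) j = (1 + vv) * (real N * ((1 + uu) * Up * mixP j * b j)) / real (Dc y)"
      unfolding Up'_def c0_def Pw1 using Z_pos by (simp add: reorg_lemma)
    have "(1 - vv) * (real N * ((1 - uu) * Lo * mixP j * b j)) \<le> (1 - vv) * Qp j"
      using Qpb[OF that] vv_bound by (intro mult_left_mono) auto
    also have "\<dots> \<le> X j" using Xb[OF that] by simp
    finally have 1: "Lo' * Pw \<mu> \<beta> M \<Phi> (Suc r) j \<le> pop (Suc r) y j"
      unfolding e1 pop1 using Dy_pos by (intro divide_right_mono) auto
    have "X j \<le> (1 + vv) * Qp j" using Xb[OF that] by simp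
    also have "\<dots> \<le> (1 + vv) * (real N * ((1 + uu) * Up * mixP j * b j))"
      using Qpb[OF that] vv_bound by (intro mult_left_mono) auto
    finally have 2: "pop (Suc r) y j \<le> Up' * Pw \<mu> \<beta> M \<Phi> (Suc r) j"
      unfolding e2 pop1 using Dy_pos by (intro divide_right_mono) auto
    show ?thesis using 1 2 by simp
  qed
  have "Up' \<le> (1 + vv) * (1 + uu) * (FF ^ r * Lo) * c0"
    unfolding Up'_def using box(2) uu_bound vv_bound c0_pos by (intro mult_right_mono mult_left_mono) auto
  also have "\<dots> = FF ^ Suc r * Lo'"
  proof -
    have "FF * ((1 - uu) * (1 - vv)) = (1 + uu) * (1 + vv)"
      using uu_bound vv_bound by (simp add: FF_def)
    have "(1 + vv) * (1 + uu) * (FF ^ r * Lo) * c0 = FF ^ r * ((1 + uu) * (1 + vv)) * Lo * c0"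
      by (simp only: mult_ac)
    also have "\<dots> = FF ^ r * (FF * ((1 - uu) * (1 - vv))) * Lo * c0" using \<open>FF * ((1 - uu) * (1 - vv)) = (1 + uu) * (1 + vv)\<close> by simp
    also have "\<dots> = FF ^ Suc r * Lo'" unfolding Lo'_def by (simp only: power_Suc mult_ac)
    finally show ?thesis .
  qed
  finally have Up'_le: "Up' \<le> FF ^ Suc r * Lo'" .
  have ex: "\<exists>Lo Up. 0 < Lo \<and> Up \<le> FF ^ Suc r * Lo \<and>
          (\<forall>j<M. Lo * Pw \<mu> \<beta> M \<Phi> (Suc r) j \<le> pop (Suc r) y j \<and> pop (Suc r) y j \<le> Up * Pw \<mu> \<beta> M \<Phi> (Suc r) j)"
    using Lo'_pos Up'_le newbox by blast
  have "Suc r \<noteq> 0" "Suc r > 0" by auto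
  then show ?thesis
    unfolding G_def using suppy Dy ex by blast
qed

end


lemma prob_via_support:
  assumes "\<And>y. y \<in> set_pmf p \<Longrightarrow> y \<in> A \<Longrightarrow> y \<in> B"
  shows "measure_pmf.prob p A \<le> measure_pmf.prob p B"
proof -
  have "measure_pmf.prob p A = measure_pmf.prob p (A \<inter> set_pmf p)" by (simp add: measure_Int_set_pmf)
  also have "\<dots> \<le> measure_pmf.prob p B" using assms by (intro measure_pmf.finite_measure_mono) auto
  finally show ?thesis .
qed

context rsetup begin

lemma tailN': "exp (-(s\<^sup>2 * x / 4)) \<le> 1 / real N ^ 11" if "x \<ge> real N * (1 - \<beta>) / 2" for x
proof -
  have "s\<^sup>2 * (real N * (1 - \<beta>) / 2) / 4 \<le> s\<^sup>2 * x / 4"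
    using that by (intro divide_right_mono mult_left_mono) auto
  then have "exp (-(s\<^sup>2 * x / 4)) \<le> exp (-(s\<^sup>2 * (real N * (1 - \<beta>) / 2) / 4))" by simp
  then show ?thesis using tailN by linarith
qed

lemma stage3:
  fixes \<Lambda>s :: "nat \<Rightarrow> nat \<Rightarrow> real" and x :: "nat \<Rightarrow> nat option" and \<Phi> :: "nat \<Rightarrow> nat \<Rightarrow> bool" and r :: nat
  assumes Gx: "G \<Phi> r x"
    and err: "\<forall>i<N. \<forall>j<M. \<bar>Qhat \<epsilon> M (\<Lambda>s i) j - pop r x j\<bar> \<le> \<tau>"
  shows "measure_pmf.prob (Pi_pmf {..<N} None (\<lambda>i. adopt_pmf \<epsilon> \<mu> \<beta> M (\<Phi> (Suc r)) (\<Lambda>s i)))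
           {y. \<not> G \<Phi> (Suc r) y} \<le> 2 * real M / real N ^ 11"
proof -
  define P3 where "P3 = Pi_pmf {..<N} None (\<lambda>i. adopt_pmf \<epsilon> \<mu> \<beta> M (\<Phi> (Suc r)) (\<Lambda>s i))"
  define b where "b = (\<lambda>j. if \<Phi> (Suc r) j then \<beta> else 1 - \<beta>)"
  define sel where "sel = (\<lambda>i j. (1 - \<mu>) * Qhat \<epsilon> M (\<Lambda>s i) j + \<mu> / real M)"
  define Qp where "Qp j = (\<Sum>i\<in>{..<N}. measure_pmf.prob (adopt_pmf \<epsilon> \<mu> \<beta> M (\<Phi> (Suc r)) (\<Lambda>s i)) {v. v = Some j})" for j
  define Bad where "Bad j = {y. s * real N < \<bar>real (card {i\<in>{..<N}. y i = Some j}) - Qp j\<bar>}" for j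
  have Qp_eq: "Qp j = (\<Sum>i<N. sel i j * b j)" if "j < M" for j
    unfolding Qp_def sel_def b_def using prob_adopt[of M \<mu> \<beta> j] M1 mu0 mu1 b0 b1 that
    by (intro sum.cong) auto
  have Qp_le: "Qp j \<le> real N" for j
  proof -
    have "Qp j \<le> (\<Sum>i\<in>{..<N}. 1)" unfolding Qp_def by (intro sum_mono) auto
    then show ?thesis by simp
  qed
  have pBad: "measure_pmf.prob P3 (Bad j) \<le> 2 / real N ^ 11" for j
  proof -
    have "measure_pmf.prob P3 (Bad j) \<le> 2 * exp (-(s\<^sup>2 * real N / 4))"
      unfolding P3_def Bad_def
      by (rule chernoff_abs[where f="\<lambda>i v. v = Some j", OF _ Qp_def Qp_le]) (use s0 sA in auto)
    also have "\<dots> \<le> 2 * (1 / real N ^ 11)"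
    proof -
      have "real N * (1 - \<beta>) / 2 \<le> real N" using N_pos b0 b1 by simp
      then show ?thesis using tailN'[of "real N"] by simp
    qed
    finally show ?thesis by simp
  qed
  have sub: "y \<in> (\<Union>j\<in>{..<M}. Bad j)" if y: "y \<in> set_pmf P3" "y \<in> {y. \<not> G \<Phi> (Suc r) y}" for y
  proof (rule ccontr)
    assume nb: "y \<notin> (\<Union>j\<in>{..<M}. Bad j)"
    have suppy: "\<forall>i j. y i = Some j \<longrightarrow> j < M"
    proof (intro allI impI)
      fix i j assume yi: "y i = Some j"
      have "y \<in> PiE_dflt {..<N} None (set_pmf \<circ> (\<lambda>i. adopt_pmf \<epsilon> \<mu> \<beta> M (\<Phi> (Suc r)) (\<Lambda>s i)))"
        using y(1) set_Pi_pmf[of "{..<N}" None] unfolding P3_def by auto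
      then have "i < N \<and> y i \<in> set_pmf (adopt_pmf \<epsilon> \<mu> \<beta> M (\<Phi> (Suc r)) (\<Lambda>s i))"
        using yi by (cases "i < N") (auto simp: PiE_dflt_def)
      then show "j < M" using set_adopt[of M \<mu> \<epsilon> \<beta> "\<Phi> (Suc r)" "\<Lambda>s i"] M1 mu0 mu1 yi by auto
    qed
    have conc: "\<forall>j<M. \<bar>real (card {i. i < N \<and> y i = Some j}) - (\<Sum>i<N. sel i j * b j)\<bar> \<le> s * real N"
    proof (intro allI impI)
      fix j assume j: "j < M"
      have e: "{i\<in>{..<N}. y i = Some j} = {i. i < N \<and> y i = Some j}" by auto
      have "y \<notin> Bad j" using nb j by blast
      then have "\<bar>real (card {i\<in>{..<N}. y i = Some j}) - Qp j\<bar> \<le> s * real N"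
        unfolding Bad_def by (simp add: not_less)
      then show "\<bar>real (card {i. i < N \<and> y i = Some j}) - (\<Sum>i<N. sel i j * b j)\<bar> \<le> s * real N"
        unfolding e Qp_eq[OF j] .
    qed
    have "G \<Phi> (Suc r) y"
      using stage3_det[OF Gx err suppy] conc unfolding sel_def b_def by blast
    then show False using y(2) by simp
  qed
  have "measure_pmf.prob P3 {y. \<not> G \<Phi> (Suc r) y} \<le> measure_pmf.prob P3 (\<Union>j\<in>{..<M}. Bad j)"
    by (rule prob_via_support) (use sub in blast)
  also have "\<dots> \<le> (\<Sum>j<M. measure_pmf.prob P3 (Bad j))" by (rule union_bound_pmf) simp
  also have "\<dots> \<le> (\<Sum>j<M. 2 / real N ^ 11)" by (intro sum_mono pBad)
  also have "\<dots> = 2 * real M / real N ^ 11" by simp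
  finally show ?thesis unfolding P3_def .
qed

end


lemma lambda_err:
  fixes n m En Em \<nu> \<Lambda>b s w :: real
  assumes "\<nu> > 0" "0 \<le> \<Lambda>b" "\<Lambda>b \<le> 1" "\<bar>En - \<nu>\<bar> \<le> \<nu> * w" "\<bar>Em - \<Lambda>b * \<nu>\<bar> \<le> \<Lambda>b * \<nu> * w"
    "\<bar>n - En\<bar> \<le> s * \<nu>" "\<bar>m - Em\<bar> \<le> s * \<nu>" "s + w \<le> 1/2" "0 \<le> w" "0 \<le> s"
  shows "\<bar>m / n - \<Lambda>b\<bar> \<le> 4 * s + 4 * w"
proof -
  have "n \<ge> \<nu> - \<nu> * w - s * \<nu>" using assms(4,6) by (auto simp: abs_le_iff)
  moreover have "\<nu> * w + s * \<nu> \<le> \<nu> / 2"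
  proof -
    have "\<nu> * (s + w) \<le> \<nu> * (1/2)" using assms(1,8) by (intro mult_left_mono) auto
    then show ?thesis by (simp add: algebra_simps)
  qed
  ultimately have n2: "n \<ge> \<nu> / 2" by linarith
  then have npos: "n > 0" using assms(1) by linarith
  have a1: "\<bar>\<Lambda>b * (\<nu> - En)\<bar> \<le> 1 * (\<nu> * w)"
    unfolding abs_mult using assms(2,3,4) by (intro mult_mono) (auto simp: abs_minus_commute)
  have a2: "\<bar>\<Lambda>b * (En - n)\<bar> \<le> 1 * (s * \<nu>)"
    unfolding abs_mult using assms(2,3,6) by (intro mult_mono) (auto simp: abs_minus_commute)
  have a3: "\<bar>Em - \<Lambda>b * \<nu>\<bar> \<le> \<nu> * w"
  proof -
    have "\<Lambda>b * (\<nu> * w) \<le> 1 * (\<nu> * w)" using assms(1,3,9) by (intro mult_right_mono) auto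
    then show ?thesis using assms(5) by (simp add: mult.assoc)
  qed
  have decomp: "m - \<Lambda>b * n = (m - Em) + (Em - \<Lambda>b * \<nu>) + \<Lambda>b * (\<nu> - En) + \<Lambda>b * (En - n)"
    by (simp add: algebra_simps)
  then have "\<bar>m - \<Lambda>b * n\<bar> \<le> \<bar>m - Em\<bar> + \<bar>Em - \<Lambda>b * \<nu>\<bar> + \<bar>\<Lambda>b * (\<nu> - En)\<bar> + \<bar>\<Lambda>b * (En - n)\<bar>"
  proof -
    have "\<bar>(m - Em) + (Em - \<Lambda>b * \<nu>) + \<Lambda>b * (\<nu> - En) + \<Lambda>b * (En - n)\<bar>
       \<le> \<bar>(m - Em) + (Em - \<Lambda>b * \<nu>) + \<Lambda>b * (\<nu> - En)\<bar> + \<bar>\<Lambda>b * (En - n)\<bar>" by (rule abs_triangle_ineq)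
    also have "\<bar>(m - Em) + (Em - \<Lambda>b * \<nu>) + \<Lambda>b * (\<nu> - En)\<bar> \<le> \<bar>(m - Em) + (Em - \<Lambda>b * \<nu>)\<bar> + \<bar>\<Lambda>b * (\<nu> - En)\<bar>" by (rule abs_triangle_ineq)
    also have "\<bar>(m - Em) + (Em - \<Lambda>b * \<nu>)\<bar> \<le> \<bar>m - Em\<bar> + \<bar>Em - \<Lambda>b * \<nu>\<bar>" by (rule abs_triangle_ineq)
    finally show ?thesis unfolding decomp by simp
  qed
  also have "\<dots> \<le> s * \<nu> + \<nu> * w + \<nu> * w + s * \<nu>"
    using a1 a2 a3 assms(7) by (intro add_mono) auto
  finally have num: "\<bar>m - \<Lambda>b * n\<bar> \<le> 2 * \<nu> * (s + w)" by (simp add: algebra_simps)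
  have "m / n - \<Lambda>b = (m - \<Lambda>b * n) / n" using npos by (simp add: field_simps)
  then have "\<bar>m / n - \<Lambda>b\<bar> = \<bar>m - \<Lambda>b * n\<bar> / n" using npos by simp
  also have "\<dots> \<le> (2 * \<nu> * (s + w)) / n" using num npos by (intro divide_right_mono) auto
  also have "\<dots> \<le> (2 * \<nu> * (s + w)) / (\<nu> / 2)"
    using n2 assms(1,9,10) by (intro divide_left_mono) auto
  also have "\<dots> = 4 * s + 4 * w" using assms(1) by (simp add: field_simps)
  finally show ?thesis .
qed

lemma sum_if_card:
  assumes "finite A"
  shows "(\<Sum>a\<in>A. if P a then c1 else c2) = c1 * real (card {a\<in>A. P a}) + c2 * (real (card A) - real (card {a\<in>A. P a}))"
proof -
  have "(\<Sum>a\<in>A. if P a then c1 else c2) = c1 * real (card {a\<in>A. P a}) + c2 * real (card {a\<in>A. \<not> P a})"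
    using assms by (simp add: sum.If_cases Int_def mult.commute)
  moreover have "card {a\<in>A. \<not> P a} = card A - card {a\<in>A. P a}"
  proof -
    have "{a\<in>A. \<not> P a} = A - {a\<in>A. P a}" by auto
    then show ?thesis using assms by (simp add: card_Diff_subset)
  qed
  moreover have "card {a\<in>A. P a} \<le> card A" using assms by (intro card_mono) auto
  ultimately show ?thesis by (simp add: of_nat_diff)
qed

lemma rr_identity:
  fixes e q :: real
  assumes "e > 1"
  shows "(e + 1) / (e - 1) * ((e / (e + 1)) * q + (1 - e / (e + 1)) * (1 - q)) - 1 / (e - 1) = q"
proof -
  define a where "a = e + 1"
  define c where "c = e - 1"
  have a: "a \<noteq> 0" "a - e = 1" and c: "c \<noteq> 0" using assms by (auto simp: a_def c_def)
  have "a / c * (e / a * q + (1 - e / a) * (1 - q)) = a / c * (e / a) * q + a / c * (1 - e / a) * (1 - q)"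
    by (simp only: distrib_left mult.assoc)
  also have "a / c * (e / a) = e / c" using a by simp
  also have "a / c * (1 - e / a) = 1 / c"
  proof -
    have "a / c * (1 - e / a) = (a - e) / c" using a by (simp add: field_simps)
    then show ?thesis using a by simp
  qed
  finally have "a / c * (e / a * q + (1 - e / a) * (1 - q)) - 1 / c = (e * q + (1 - q) - 1) / c"
    by (simp add: add_divide_distrib diff_divide_distrib)
  also have "(e * q + (1 - q) - 1) = c * q" by (simp add: c_def algebra_simps)
  also have "c * q / c = q" using c by simp
  finally show ?thesis by (simp add: a_def c_def)
qed

context rsetup begin

definition "Aset x = {i. i < N \<and> x i \<noteq> None}"
definition "ES x j = (\<Sum>a\<in>Aset x. measure_pmf.prob (perturb_pmf \<epsilon> M x a) {v. v j})"
definition "bad1 x = {pv. \<exists>j<M. s * real (card (Aset x)) < \<bar>real (card {a\<in>Aset x. pv a j}) - ES x j\<bar>}"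

lemma Aset_fin: "finite (Aset x)" unfolding Aset_def by (rule finite_subset[of _ "{..<N}"]) auto

lemma Dc_Aset: "Dc x = card (Aset x)" by (simp add: Dc_def Aset_def)

lemma prob_perturb:
  assumes "j < M"
  shows "measure_pmf.prob (perturb_pmf \<epsilon> M x a) {v. v j} =
    (if x a = Some j then exp (\<epsilon>/2) / (exp (\<epsilon>/2) + 1) else 1 - exp (\<epsilon>/2) / (exp (\<epsilon>/2) + 1))"
proof -
  define pr where "pr = exp (\<epsilon>/2) / (exp (\<epsilon>/2) + 1)"
  have pr: "0 \<le> pr" "pr \<le> 1" by (auto simp: pr_def add_pos_pos)
  have "measure_pmf.prob (perturb_pmf \<epsilon> M x a) {v. v j} =
        measure_pmf.prob (map_pmf (\<lambda>v. v j) (perturb_pmf \<epsilon> M x a)) {True}"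
    by (simp add: vimage_def)
  also have "map_pmf (\<lambda>v. v j) (perturb_pmf \<epsilon> M x a) =
     map_pmf (\<lambda>keep. if keep then x a = Some j else x a \<noteq> Some j) (bernoulli_pmf pr)"
    unfolding perturb_pmf_def pr_def using assms by (subst Pi_pmf_component) auto
  also have "measure_pmf.prob \<dots> {True} = (if x a = Some j then pr else 1 - pr)"
  proof (cases "x a = Some j")
    case True
    then have "(\<lambda>keep. if keep then x a = Some j else x a \<noteq> Some j) -` {True} = {True}" by auto
    then show ?thesis using True pr by (simp add: measure_pmf_single)
  next
    case False
    then have "(\<lambda>keep. if keep then x a = Some j else x a \<noteq> Some j) -` {True} = {False}" by auto
    then have "measure_pmf.prob (map_pmf (\<lambda>keep. if keep then x a = Some j else x a \<noteq> Some j) (bernoulli_pmf pr)) {True}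
       = measure_pmf.prob (bernoulli_pmf pr) {False}"
      by (simp only: measure_map_pmf)
    also have "\<dots> = 1 - pr" using pr by (simp add: measure_pmf_single)
    finally show ?thesis using False by simp
  qed
  finally show ?thesis by (simp add: pr_def)
qed

lemma ES_identity:
  assumes Gx: "G \<Phi> r x" and r: "r > 0" and j: "j < M"
  shows "\<kappa> * (ES x j / real (card (Aset x))) - 1 / (exp (\<epsilon>/2) - 1) = pop r x j"
proof -
  define e where "e = exp (\<epsilon>/2)"
  have e1: "e > 1" using eps by (simp add: e_def)
  define D where "D = real (card (Aset x))"
  define Dj where "Dj = real (card {a\<in>Aset x. x a = Some j})"
  have Dpos: "D > 0"
  proof -
    have "real (Dc x) \<ge> real N * (1 - \<beta>) / 2" using Gx r by (simp add: G_def)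
    moreover have "real N * (1 - \<beta>) / 2 > 0" using N_pos b1 by simp
    ultimately show ?thesis by (simp add: D_def Dc_Aset)
  qed
  have "ES x j = (\<Sum>a\<in>Aset x. if x a = Some j then e / (e + 1) else 1 - e / (e + 1))"
    unfolding ES_def e_def using prob_perturb[OF j] by (intro sum.cong) auto
  also have "\<dots> = e / (e + 1) * Dj + (1 - e / (e + 1)) * (D - Dj)"
    unfolding D_def Dj_def by (rule sum_if_card[OF Aset_fin])
  finally have "ES x j / D = (e / (e + 1) * Dj + (1 - e / (e + 1)) * (D - Dj)) / D" by simp
  also have "\<dots> = e / (e + 1) * (Dj / D) + (1 - e / (e + 1)) * ((D - Dj) / D)"
    by (simp add: add_divide_distrib)
  also have "(D - Dj) / D = 1 - Dj / D" using Dpos by (simp add: diff_divide_distrib)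
  finally have ES: "ES x j / D = e / (e + 1) * (Dj / D) + (1 - e / (e + 1)) * (1 - Dj / D)" .
  have pop: "pop r x j = Dj / D"
  proof -
    have "{a\<in>Aset x. x a = Some j} = {i. i < N \<and> x i = Some j}" by (auto simp: Aset_def)
    then show ?thesis using r by (simp add: pop_def popularity_def Dj_def D_def Aset_def)
  qed
  show ?thesis unfolding kappa e_def[symmetric] ES[unfolded D_def] pop[unfolded D_def]
    using rr_identity[OF e1] by blast
qed

lemma stage1:
  assumes Gx: "G \<Phi> r x" and r: "r > 0"
  shows "measure_pmf.prob (Pi_pmf (Aset x) (\<lambda>_. False) (perturb_pmf \<epsilon> M x)) (bad1 x) \<le> 2 * real M / real N ^ 11"
proof -
  define P1 where "P1 = Pi_pmf (Aset x) (\<lambda>_. False) (perturb_pmf \<epsilon> M x)"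
  define D where "D = real (card (Aset x))"
  have D: "D \<ge> real N * (1 - \<beta>) / 2" using Gx r by (simp add: G_def D_def Dc_Aset)
  define B where "B j = {pv. s * D < \<bar>real (card {a\<in>Aset x. pv a j}) - ES x j\<bar>}" for j
  have ESle: "ES x j \<le> D" for j
  proof -
    have "ES x j \<le> (\<Sum>a\<in>Aset x. 1)" unfolding ES_def by (intro sum_mono) auto
    then show ?thesis by (simp add: D_def)
  qed
  have pB: "measure_pmf.prob P1 (B j) \<le> 2 / real N ^ 11" for j
  proof -
    have "measure_pmf.prob P1 (B j) \<le> 2 * exp (-(s\<^sup>2 * D / 4))"
      unfolding P1_def B_def
      by (rule chernoff_abs[where f="\<lambda>a v. v j", OF Aset_fin ES_def ESle]) (use s0 sA in auto)
    also have "\<dots> \<le> 2 * (1 / real N ^ 11)" using tailN'[OF D] by simp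
    finally show ?thesis by simp
  qed
  have "bad1 x = (\<Union>j\<in>{..<M}. B j)" unfolding bad1_def B_def D_def by blast
  then have "measure_pmf.prob P1 (bad1 x) \<le> (\<Sum>j<M. measure_pmf.prob P1 (B j))"
    using union_bound_pmf[of "{..<M}" P1 B] by simp
  also have "\<dots> \<le> (\<Sum>j<M. 2 / real N ^ 11)" by (intro sum_mono pB)
  also have "(\<Sum>j<M. 2 / real N ^ 11) = 2 * real M / real N ^ 11" by simp
  finally show ?thesis unfolding P1_def .
qed

end


context rsetup begin

lemma walk_pmf: assumes "a < N" "i < N" shows "\<bar>pmf (mh_walk E N L a) i - 1 / real N\<bar> \<le> 1 / real N ^ 3"
proof -
  have "1 / real N - 1 / real N ^ 3 \<le> pmf (mh_walk E N L a) i \<and> pmf (mh_walk E N L a) i \<le> 1 / real N + 1 / real N ^ 3"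
    using walk assms unfolding good_walk_length_def by blast
  then show ?thesis by (simp add: abs_le_iff)
qed

lemma walk_sum:
  assumes "finite U" "\<forall>t\<in>U. fst t < N" "i < N"
  shows "\<bar>(\<Sum>t\<in>U. pmf (mh_walk E N L (fst t)) i) - real (card U) / real N\<bar> \<le> real (card U) / real N ^ 3"
proof -
  have "(\<Sum>t\<in>U. pmf (mh_walk E N L (fst t)) i) - real (card U) / real N = (\<Sum>t\<in>U. pmf (mh_walk E N L (fst t)) i - 1 / real N)"
    by (simp add: sum_subtractf)
  also have "\<bar>\<dots>\<bar> \<le> (\<Sum>t\<in>U. \<bar>pmf (mh_walk E N L (fst t)) i - 1 / real N\<bar>)" by (rule sum_abs)
  also have "\<dots> \<le> (\<Sum>t\<in>U. 1 / real N ^ 3)" using assms walk_pmf by (intro sum_mono) auto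
  also have "\<dots> = real (card U) / real N ^ 3" by simp
  finally show ?thesis .
qed

lemma K_pos: "K > 0"
proof (rule ccontr)
  assume "\<not> K > 0"
  then have "K = 0" by simp
  then have "1 \<le> 1 / real N ^ 11" using tailK by simp
  moreover have "1 / real N ^ 11 < 1" using N3 by (simp add: divide_less_eq)
  ultimately show False by simp
qed

lemma tailK': "exp (-(s\<^sup>2 * x / 8)) \<le> 1 / real N ^ 11" if "x \<ge> (1 - \<beta>) / 2 * real K" for x
proof -
  have "s\<^sup>2 * ((1 - \<beta>) / 2 * real K) / 8 \<le> s\<^sup>2 * x / 8"
    using that by (intro divide_right_mono mult_left_mono) auto
  then have "exp (-(s\<^sup>2 * x / 8)) \<le> exp (-(s\<^sup>2 * ((1 - \<beta>) / 2 * real K) / 8))" by simp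
  then show ?thesis using tailK by linarith
qed

definition "good2 x r pv ends \<longleftrightarrow> (\<forall>i<N. \<forall>j<M. \<bar>Qhat \<epsilon> M (Lambda (Aset x) K pv ends i) j - pop r x j\<bar> \<le> \<tau>)"

lemma stage2:
  assumes Gx: "G \<Phi> r x" and r: "r > 0" and pv: "pv \<notin> bad1 x"
  shows "measure_pmf.prob (Pi_pmf (Aset x \<times> {..<K}) 0 (\<lambda>t. mh_walk E N L (fst t))) {ends. \<not> good2 x r pv ends}
     \<le> 4 * real N * real M / real N ^ 11"
proof -
  define A where "A = Aset x"
  define T where "T = A \<times> {..<K}"
  define P2 where "P2 = Pi_pmf T 0 (\<lambda>t. mh_walk E N L (fst t))"
  define D where "D = real (card A)"
  have finA: "finite A" unfolding A_def by (rule Aset_fin)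
  have finT: "finite T" unfolding T_def using finA by simp
  have AN: "\<forall>a\<in>A. a < N" by (auto simp: A_def Aset_def)
  have TN: "\<forall>t\<in>T. fst t < N" using AN by (auto simp: T_def)
  have D: "D \<ge> real N * (1 - \<beta>) / 2" using Gx r by (simp add: G_def D_def A_def Dc_Aset)
  have Dpos: "D > 0"
  proof -
    have "real N * (1 - \<beta>) / 2 > 0" using N_pos b1 by simp
    then show ?thesis using D by linarith
  qed
  define \<nu> where "\<nu> = D * real K / real N"
  have cardT: "real (card T) = D * real K" by (simp add: T_def D_def card_cartesian_product)
  have \<nu>pos: "\<nu> > 0" using Dpos K_pos N_pos by (simp add: \<nu>_def)
  have \<nu>ge: "\<nu> \<ge> (1 - \<beta>) / 2 * real K"
  proof -
    have "D / real N \<ge> (1 - \<beta>) / 2" using D N_pos by (simp add: field_simps)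
    then have "D / real N * real K \<ge> (1 - \<beta>) / 2 * real K" by (intro mult_right_mono) auto
    then show ?thesis by (simp add: \<nu>_def)
  qed
  define w where "w = 1 / (real N)\<^sup>2"
  have w: "0 \<le> w" "w \<le> s / 4" using invN2 by (auto simp: w_def)
  have w1: "w \<le> 1" using w sA by simp
  have N3w: "real (card U) / real N ^ 3 = real (card U) / real N * w" for U :: "(nat \<times> nat) set"
    using N_pos by (simp add: w_def power2_eq_square power3_eq_cube)
  define En where "En i = (\<Sum>t\<in>T. measure_pmf.prob (mh_walk E N L (fst t)) {v. v = i})" for i
  define Em where "Em i j = (\<Sum>t\<in>T. measure_pmf.prob (mh_walk E N L (fst t)) {v. v = i \<and> pv (fst t) j})" for i j
  define S where "S j = real (card {a\<in>A. pv a j})" for j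
  define \<Lambda>b where "\<Lambda>b j = S j / D" for j
  have \<Lambda>b: "0 \<le> \<Lambda>b j" "\<Lambda>b j \<le> 1" for j
  proof -
    show "0 \<le> \<Lambda>b j" using Dpos by (simp add: \<Lambda>b_def S_def)
    have "card {a\<in>A. pv a j} \<le> card A" using finA by (intro card_mono) auto
    then show "\<Lambda>b j \<le> 1" using Dpos by (simp add: \<Lambda>b_def S_def D_def)
  qed
  have En_eq: "En i = (\<Sum>t\<in>T. pmf (mh_walk E N L (fst t)) i)" for i
    unfolding En_def by (simp add: measure_pmf_single)
  have En_b: "\<bar>En i - \<nu>\<bar> \<le> \<nu> * w" if "i < N" for i
  proof -
    have "\<bar>En i - real (card T) / real N\<bar> \<le> real (card T) / real N * w"
      using walk_sum[OF finT TN that] unfolding En_eq[symmetric] N3w .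
    then show ?thesis by (simp only: cardT \<nu>_def)
  qed
  have Em_b: "\<bar>Em i j - \<Lambda>b j * \<nu>\<bar> \<le> \<Lambda>b j * \<nu> * w" if "i < N" for i j
  proof -
    define Tj where "Tj = {t\<in>T. pv (fst t) j}"
    have finTj: "finite Tj" using finT by (simp add: Tj_def)
    have TjN: "\<forall>t\<in>Tj. fst t < N" using TN by (auto simp: Tj_def)
    have "Em i j = (\<Sum>t\<in>T. if pv (fst t) j then pmf (mh_walk E N L (fst t)) i else 0)"
      unfolding Em_def by (intro sum.cong) (auto simp: measure_pmf_single)
    also have "\<dots> = (\<Sum>t\<in>Tj. pmf (mh_walk E N L (fst t)) i)"
      unfolding Tj_def using finT by (simp add: sum.If_cases Int_def)
    finally have Em: "Em i j = (\<Sum>t\<in>Tj. pmf (mh_walk E N L (fst t)) i)" .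
    have "Tj = {a\<in>A. pv a j} \<times> {..<K}" by (auto simp: Tj_def T_def)
    then have cTj: "real (card Tj) = S j * real K" by (simp add: S_def card_cartesian_product)
    have "real (card Tj) / real N = \<Lambda>b j * \<nu>" using Dpos by (simp add: cTj \<Lambda>b_def \<nu>_def)
    then show ?thesis using walk_sum[OF finTj TjN that] unfolding Em[symmetric] N3w by simp
  qed
  have En_le: "En i \<le> 2 * \<nu>" if "i < N" for i
  proof -
    have "En i \<le> \<nu> + \<nu> * w" using En_b[OF that] by (simp add: abs_le_iff)
    moreover have "\<nu> * w \<le> \<nu> * 1" using w1 \<nu>pos by (intro mult_left_mono) auto
    ultimately show ?thesis by simp
  qed
  have Em_le: "Em i j \<le> 2 * \<nu>" if "i < N" for i j
  proof -
    have "Em i j \<le> \<Lambda>b j * \<nu> + \<Lambda>b j * \<nu> * w" using Em_b[OF that, of j] by (simp add: abs_le_iff)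
    also have "\<dots> = \<Lambda>b j * (\<nu> * (1 + w))" by (simp add: algebra_simps)
    also have "\<dots> \<le> 1 * (\<nu> * (1 + w))" using \<Lambda>b \<nu>pos w by (intro mult_right_mono) auto
    also have "\<dots> \<le> 2 * \<nu>" using w1 \<nu>pos by simp
    finally show ?thesis .
  qed
  define Bn where "Bn i = {ends. s / 2 * (2 * \<nu>) < \<bar>real (card {t\<in>T. ends t = i}) - En i\<bar>}" for i
  define Bm where "Bm i j = {ends. s / 2 * (2 * \<nu>) < \<bar>real (card {t\<in>T. ends t = i \<and> pv (fst t) j}) - Em i j\<bar>}" for i j
  have tail: "2 * exp (-((s / 2)\<^sup>2 * (2 * \<nu>) / 4)) \<le> 2 / real N ^ 11"
  proof -
    have "(s / 2)\<^sup>2 * (2 * \<nu>) / 4 = s\<^sup>2 * \<nu> / 8" by (simp add: power2_eq_square)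
    then have "exp (-((s / 2)\<^sup>2 * (2 * \<nu>) / 4)) \<le> 1 / real N ^ 11" using tailK'[OF \<nu>ge] by (simp only:)
    then show ?thesis by simp
  qed
  have pBn: "measure_pmf.prob P2 (Bn i) \<le> 2 / real N ^ 11" if "i < N" for i
  proof -
    have "measure_pmf.prob P2 (Bn i) \<le> 2 * exp (-((s / 2)\<^sup>2 * (2 * \<nu>) / 4))"
      unfolding P2_def Bn_def
      by (rule chernoff_abs[where f="\<lambda>t v. v = i", OF finT En_def En_le[OF that]]) (use s0 sA in auto)
    then show ?thesis using tail by linarith
  qed
  have pBm: "measure_pmf.prob P2 (Bm i j) \<le> 2 / real N ^ 11" if "i < N" for i j
  proof -
    have "measure_pmf.prob P2 (Bm i j) \<le> 2 * exp (-((s / 2)\<^sup>2 * (2 * \<nu>) / 4))"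
      unfolding P2_def Bm_def
      by (rule chernoff_abs[where f="\<lambda>t v. v = i \<and> pv (fst t) j", OF finT Em_def Em_le[OF that]]) (use s0 sA in auto)
    then show ?thesis using tail by linarith
  qed
  have ESb: "\<bar>\<Lambda>b j - ES x j / D\<bar> \<le> s" if "j < M" for j
  proof -
    have "\<not> (s * real (card (Aset x)) < \<bar>real (card {a\<in>Aset x. pv a j}) - ES x j\<bar>)"
      using pv that unfolding bad1_def by blast
    then have sd: "\<bar>S j - ES x j\<bar> \<le> s * D" unfolding S_def D_def A_def by (simp add: not_less)
    have "\<Lambda>b j - ES x j / D = (S j - ES x j) / D" using Dpos by (simp add: \<Lambda>b_def diff_divide_distrib)
    then have "\<bar>\<Lambda>b j - ES x j / D\<bar> = \<bar>S j - ES x j\<bar> / D" using Dpos by simp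
    also have "\<dots> \<le> s * D / D" using sd Dpos by (intro divide_right_mono) auto
    also have "\<dots> = s" using Dpos by simp
    finally show ?thesis .
  qed
  have good: "good2 x r pv ends" if nb: "ends \<notin> (\<Union>i\<in>{..<N}. \<Union>j\<in>{..<M}. Bn i \<union> Bm i j)" for ends
    unfolding good2_def
  proof (intro allI impI)
    fix i j assume i: "i < N" and j: "j < M"
    define lam where "lam j = Lambda (Aset x) K pv ends j" for j
    have lam_b: "\<bar>lam i j' - ES x j' / D\<bar> \<le> tt" if j': "j' < M" for j'
    proof -
      have n: "\<bar>real (card {t\<in>T. ends t = i}) - En i\<bar> \<le> s * \<nu>"
      proof -
        have "ends \<notin> Bn i" using nb i j by blast
        then show ?thesis unfolding Bn_def by (simp add: not_less)
      qed
      have m: "\<bar>real (card {t\<in>T. ends t = i \<and> pv (fst t) j'}) - Em i j'\<bar> \<le> s * \<nu>"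
      proof -
        have "ends \<notin> Bm i j'" using nb i j' by blast
        then show ?thesis unfolding Bm_def by (simp add: not_less)
      qed
      have "\<bar>lam i j' - \<Lambda>b j'\<bar> \<le> 4 * s + 4 * w"
        unfolding lam_def Lambda_def A_def[symmetric] T_def[symmetric]
        by (rule lambda_err[OF \<nu>pos \<Lambda>b En_b[OF i] Em_b[OF i] n m]) (use w sA s0 in auto)
      moreover have "tt = 5 * s + 4 * w" by (simp add: tt_def w_def)
      ultimately show ?thesis using ESb[OF j'] by (simp only: abs_le_iff) linarith
    qed
    have e1: "1 < exp (\<epsilon>/2)" using eps by simp
    have small: "real M * (\<kappa> * tt) \<le> 1/2"
    proof -
      have "real M * (\<kappa> * tt) \<le> real M * (\<kappa> * (6 * s))"
        using tt_le kappa_pos by (intro mult_left_mono) auto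
      then show ?thesis using sB by (simp add: algebra_simps)
    qed
    have Q0: "\<forall>j<M. 0 \<le> pop r x j" using G_facts(3)[OF Gx] by blast
    have Qs: "(\<Sum>j<M. pop r x j) = 1" using G_facts(2)[OF Gx] .
    have La: "\<forall>j<M. \<bar>lam i j - ES x j / D\<bar> \<le> tt" using lam_b by blast
    have aQ: "\<forall>j<M. (exp (\<epsilon>/2) + 1) / (exp (\<epsilon>/2) - 1) * (ES x j / D) - 1 / (exp (\<epsilon>/2) - 1) = pop r x j"
      using ES_identity[OF Gx r] unfolding kappa D_def A_def by blast
    have small': "real M * ((exp (\<epsilon>/2) + 1) / (exp (\<epsilon>/2) - 1) * tt) \<le> 1/2"
      using small unfolding kappa .
    have "\<bar>Qhat \<epsilon> M (lam i) j - pop r x j\<bar> \<le> 2 * (real M + 1) * ((exp (\<epsilon>/2) + 1) / (exp (\<epsilon>/2) - 1) * tt)"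
      by (rule Qhat_err[OF M1 e1 Q0 Qs La aQ small' j])
    then have "\<bar>Qhat \<epsilon> M (lam i) j - pop r x j\<bar> \<le> 2 * (real M + 1) * (\<kappa> * tt)"
      unfolding kappa .
    then show "\<bar>Qhat \<epsilon> M (Lambda (Aset x) K pv ends i) j - pop r x j\<bar> \<le> \<tau>"
      by (simp add: lam_def \<tau>_def)
  qed
  have "measure_pmf.prob P2 {ends. \<not> good2 x r pv ends} \<le> measure_pmf.prob P2 (\<Union>i\<in>{..<N}. \<Union>j\<in>{..<M}. Bn i \<union> Bm i j)"
  proof (rule measure_pmf.finite_measure_mono)
    show "{ends. \<not> good2 x r pv ends} \<subseteq> (\<Union>i\<in>{..<N}. \<Union>j\<in>{..<M}. Bn i \<union> Bm i j)"
      using good by blast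
  qed simp
  also have "\<dots> \<le> (\<Sum>i<N. measure_pmf.prob P2 (\<Union>j\<in>{..<M}. Bn i \<union> Bm i j))" by (rule union_bound_pmf) simp
  also have "\<dots> \<le> (\<Sum>i<N. \<Sum>j<M. measure_pmf.prob P2 (Bn i \<union> Bm i j))"
    by (intro sum_mono union_bound_pmf) simp
  also have "\<dots> \<le> (\<Sum>i<N. \<Sum>j<M. 4 / real N ^ 11)"
  proof (intro sum_mono)
    fix i j assume "i \<in> {..<N}" "j \<in> {..<M}"
    then have "measure_pmf.prob P2 (Bn i \<union> Bm i j) \<le> measure_pmf.prob P2 (Bn i) + measure_pmf.prob P2 (Bm i j)"
      by (intro measure_Un_le) auto
    also have "\<dots> \<le> 2 / real N ^ 11 + 2 / real N ^ 11" using pBn pBm \<open>i \<in> {..<N}\<close> by (intro add_mono) auto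
    finally show "measure_pmf.prob P2 (Bn i \<union> Bm i j) \<le> 4 / real N ^ 11" by simp
  qed
  also have "\<dots> = 4 * real N * real M / real N ^ 11" by simp
  finally show ?thesis unfolding P2_def T_def A_def .
qed

end


context rsetup begin

lemma Qhat_zero: "Qhat \<epsilon> M (\<lambda>j. 0) j = 1 / real M"
proof -
  have "exp (\<epsilon>/2) > 1" using eps by simp
  then have "Qtilde \<epsilon> 0 = 0" by (simp add: Qtilde_def)
  then show ?thesis by (simp add: Qhat_def)
qed

lemma round_ok:
  assumes Gx: "G \<Phi> r x"
  shows "measure_pmf.prob (round_step E N L K M \<epsilon> \<mu> \<beta> (\<Phi> (Suc r)) x) {y. \<not> G \<Phi> (Suc r) y}
     \<le> (4 * real N * real M + 4 * real M) / real N ^ 11"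
proof -
  have rs: "round_step E N L K M \<epsilon> \<mu> \<beta> (\<Phi> (Suc r)) x =
     bind_pmf (Pi_pmf (Aset x) (\<lambda>_. False) (perturb_pmf \<epsilon> M x)) (\<lambda>pv.
      bind_pmf (Pi_pmf (Aset x \<times> {..<K}) 0 (\<lambda>t. mh_walk E N L (fst t))) (\<lambda>ends.
      Pi_pmf {..<N} None (\<lambda>i. adopt_pmf \<epsilon> \<mu> \<beta> M (\<Phi> (Suc r)) (Lambda (Aset x) K pv ends i))))"
    by (simp add: round_step_def Aset_def Let_def)
  have st3: "measure_pmf.prob (Pi_pmf {..<N} None (\<lambda>i. adopt_pmf \<epsilon> \<mu> \<beta> M (\<Phi> (Suc r)) (Lambda (Aset x) K pv ends i))) {y. \<not> G \<Phi> (Suc r) y}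
      \<le> 2 * real M / real N ^ 11" if "good2 x r pv ends" for pv ends
    using stage3[OF Gx, of "\<lambda>i. Lambda (Aset x) K pv ends i"] that unfolding good2_def by blast
  have N11: "0 \<le> 2 * real M / real N ^ 11" by simp
  show ?thesis
  proof (cases "r > 0")
    case True
    have "measure_pmf.prob (round_step E N L K M \<epsilon> \<mu> \<beta> (\<Phi> (Suc r)) x) {y. \<not> G \<Phi> (Suc r) y}
       \<le> 2 * real M / real N ^ 11 + (4 * real N * real M / real N ^ 11 + 2 * real M / real N ^ 11)"
      unfolding rs
    proof (rule prob_bind_bad[OF stage1[OF Gx True]])
      show "0 \<le> 4 * real N * real M / real N ^ 11 + 2 * real M / real N ^ 11" by simp
      fix pv assume pv: "pv \<notin> bad1 x"
      show "measure_pmf.prob (bind_pmf (Pi_pmf (Aset x \<times> {..<K}) 0 (\<lambda>t. mh_walk E N L (fst t))) (\<lambda>ends.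
           Pi_pmf {..<N} None (\<lambda>i. adopt_pmf \<epsilon> \<mu> \<beta> M (\<Phi> (Suc r)) (Lambda (Aset x) K pv ends i)))) {y. \<not> G \<Phi> (Suc r) y}
         \<le> 4 * real N * real M / real N ^ 11 + 2 * real M / real N ^ 11"
        by (rule prob_bind_bad[OF stage2[OF Gx True pv] N11]) (use st3 in auto)
    qed
    also have "\<dots> = (2 * real M + (4 * real N * real M + 2 * real M)) / real N ^ 11"
      by (simp only: add_divide_distrib)
    also have "2 * real M + (4 * real N * real M + 2 * real M) = 4 * real N * real M + 4 * real M" by simp
    finally show ?thesis .
  next
    case False
    then have r0: "r = 0" by simp
    then have x0: "x = (\<lambda>_. None)" using Gx by (simp add: G_def)
    then have A0: "Aset x = {}" by (simp add: Aset_def)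
    have g2: "good2 x r pv ends" for pv ends
    proof -
      have "Lambda (Aset x) K pv ends i = (\<lambda>j. 0)" for i by (rule ext) (simp add: Lambda_def A0)
      then show ?thesis unfolding good2_def using r0 tau_nonneg by (simp add: Qhat_zero pop_def popularity_def)
    qed
    have "measure_pmf.prob (round_step E N L K M \<epsilon> \<mu> \<beta> (\<Phi> (Suc r)) x) {y. \<not> G \<Phi> (Suc r) y}
       \<le> 0 + (0 + 2 * real M / real N ^ 11)"
      unfolding rs
    proof (rule prob_bind_bad[where BA="{}"])
      show "0 \<le> 0 + 2 * real M / real N ^ 11" by simp
      fix pv
      show "measure_pmf.prob (bind_pmf (Pi_pmf (Aset x \<times> {..<K}) 0 (\<lambda>t. mh_walk E N L (fst t))) (\<lambda>ends.
           Pi_pmf {..<N} None (\<lambda>i. adopt_pmf \<epsilon> \<mu> \<beta> M (\<Phi> (Suc r)) (Lambda (Aset x) K pv ends i)))) {y. \<not> G \<Phi> (Suc r) y}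
         \<le> 0 + 2 * real M / real N ^ 11"
        by (rule prob_bind_bad[where BA="{}", OF _ N11]) (use st3 g2 in auto)
    qed simp
    also have "\<dots> = 2 * real M / real N ^ 11" by simp
    also have "\<dots> \<le> (4 * real N * real M + 4 * real M) / real N ^ 11"
      by (rule divide_right_mono) auto
    finally show ?thesis .
  qed
qed

lemma G0: "G \<Phi> 0 (\<lambda>_. None)"
  unfolding G_def using FF_pos
  by (auto simp: pop_def popularity_def Pw_0 intro!: exI[of _ 1])

lemma adoption_ok:
  "measure_pmf.prob (adoption_proc E N L K M \<epsilon> \<mu> \<beta> \<Phi> r) {x. \<not> G \<Phi> r x}
     \<le> real r * ((4 * real N * real M + 4 * real M) / real N ^ 11)"
proof (induction r)
  case 0
  then show ?case using G0[of \<Phi>] by simp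
next
  case (Suc r)
  have eqC: "\<And>C::real. real r * C + C = real (Suc r) * C" by (simp add: algebra_simps)
  have "measure_pmf.prob (adoption_proc E N L K M \<epsilon> \<mu> \<beta> \<Phi> (Suc r)) {x. \<not> G \<Phi> (Suc r) x}
     \<le> real r * ((4 * real N * real M + 4 * real M) / real N ^ 11) + (4 * real N * real M + 4 * real M) / real N ^ 11"
    unfolding adoption_proc.simps
    by (rule prob_bind_bad[OF Suc.IH]) (auto intro: round_ok)
  also have "real r * ((4 * real N * real M + 4 * real M) / real N ^ 11) + (4 * real N * real M + 4 * real M) / real N ^ 11
     = real (Suc r) * ((4 * real N * real M + 4 * real M) / real N ^ 11)" by (rule eqC)
  finally show ?case .
qed

lemma FF_le: "FF \<le> 1 + 5 * (4 * real M * (2 * real M + 1) / (\<mu> * (1 - \<beta>)) * \<kappa>) * s"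
proof -
  define q where "q = \<mu> * (1 - \<beta>)"
  have q: "q > 0" using mu0 b1 by (simp add: q_def)
  have u: "0 \<le> uu" "uu \<le> 1/4" and v: "0 \<le> vv" "vv \<le> 1/4" using uu_bound vv_bound by auto
  have den: "(1 - uu) * (1 - vv) \<ge> 1/2"
  proof -
    have "(3/4) * (3/4) \<le> (1 - uu) * (1 - vv)" using u v by (intro mult_mono) auto
    then show ?thesis by simp
  qed
  have d0: "(1 - uu) * (1 - vv) \<noteq> 0" using den by linarith
  have nume: "(1 + uu) * (1 + vv) - (1 - uu) * (1 - vv) = 2 * (uu + vv)" by (simp add: algebra_simps)
  have "FF - 1 = ((1 + uu) * (1 + vv) - (1 - uu) * (1 - vv)) / ((1 - uu) * (1 - vv))"
    using d0 by (simp add: FF_def diff_divide_distrib)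
  also have "\<dots> = 2 * (uu + vv) / ((1 - uu) * (1 - vv))" unfolding nume ..
  also have "\<dots> \<le> 2 * (uu + vv) / (1/2)"
    using den u v by (intro divide_left_mono) auto
  finally have F1: "FF \<le> 1 + 4 * (uu + vv)" by simp
  have U: "uu \<le> 12 * real M * (real M + 1) * \<kappa> * s / \<mu>"
  proof -
    have "uu = 2 * (real M + 1) * (\<kappa> * tt) * real M / \<mu>"
      using M1 by (simp add: uu_def \<tau>_def mm_def)
    also have "\<dots> \<le> 2 * (real M + 1) * (\<kappa> * (6 * s)) * real M / \<mu>"
      using tt_le kappa_pos mu0 by (intro divide_right_mono mult_right_mono mult_left_mono) auto
    also have "\<dots> = 12 * real M * (real M + 1) * \<kappa> * s / \<mu>" by simp
    finally show ?thesis .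
  qed
  have V: "vv = s * real M / q" using M1 by (simp add: vv_def mm_def q_def)
  have U': "12 * real M * (real M + 1) * \<kappa> * s / \<mu> \<le> 6 * real M * (real M + 1) * \<kappa> * s / q"
  proof -
    have "12 * real M * (real M + 1) * \<kappa> * s / \<mu> = 12 * real M * (real M + 1) * \<kappa> * s * (1 - \<beta>) / q"
      using mu0 b1 by (simp add: q_def)
    also have "\<dots> \<le> 12 * real M * (real M + 1) * \<kappa> * s * (1/2) / q"
      using b0 q kappa_pos s0 by (intro divide_right_mono mult_left_mono) auto
    also have "12 * real M * (real M + 1) * \<kappa> * s * (1/2) / q = 6 * real M * (real M + 1) * \<kappa> * s / q" by simp
    finally show ?thesis .
  qed
  have V': "s * real M / q \<le> \<kappa> * s * real M / q"
    using kappa_ge1 s0 q by (intro divide_right_mono) (auto simp: mult_le_cancel_right1)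
  have "4 * (uu + vv) \<le> 4 * (6 * real M * (real M + 1) * \<kappa> * s / q + \<kappa> * s * real M / q)"
    using U U' V V' by simp
  also have "\<dots> = (24 * real M * real M + 28 * real M) * (\<kappa> * s) / q"
    using q by (simp add: field_simps)
  also have "\<dots> \<le> (40 * real M * real M + 20 * real M) * (\<kappa> * s) / q"
  proof -
    have "8 * real M \<le> 16 * real M * real M" using M1 by simp
    then have "24 * real M * real M + 28 * real M \<le> 40 * real M * real M + 20 * real M" by simp
    then show ?thesis using q kappa_pos s0 by (intro divide_right_mono mult_right_mono) auto
  qed
  also have "\<dots> = 5 * (4 * real M * (2 * real M + 1) / (\<mu> * (1 - \<beta>)) * \<kappa>) * s"
    by (simp add: q_def field_simps)
  finally show ?thesis using F1 by simp
qed

lemma final_bound: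
  assumes Gx: "G \<Phi> r x" and j: "j < M"
    and X: "FF \<le> 1 + X" "0 \<le> X" "X \<le> 1"
  shows "approx_within (1 + 5 ^ r * X / 5) (Pw \<mu> \<beta> M \<Phi> r j) (pop r x j)"
proof -
  obtain Lo Up where box: "0 < Lo" "Up \<le> FF ^ r * Lo" "Lo \<le> 1" "1 \<le> Up"
    "\<forall>j<M. Lo * Pw \<mu> \<beta> M \<Phi> r j \<le> pop r x j \<and> pop r x j \<le> Up * Pw \<mu> \<beta> M \<Phi> r j"
    using G_box[OF Gx] by blast
  define P where "P = Pw \<mu> \<beta> M \<Phi> r j"
  define Q where "Q = pop r x j"
  have P: "P > 0" using Pw_pos' by (simp add: P_def)
  have bq: "Lo * P \<le> Q" "Q \<le> Up * P" using box(5) j by (auto simp: P_def Q_def)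
  have Q: "Q > 0" using bq(1) box(1) P by (smt (verit) mult_pos_pos)
  have Fr: "FF ^ r \<le> 1 + 5 ^ r * X / 5"
  proof -
    have "FF ^ r \<le> (1 + X) ^ r" using X FF_pos by (intro power_mono) auto
    then show ?thesis using pow_bound[OF X(2,3), of r] by linarith
  qed
  have FrLo: "FF ^ r * Lo \<le> FF ^ r" using box(3) FF_pos by (simp add: mult_left_le)
  have Up_le: "Up \<le> FF ^ r" using box(2) FrLo by linarith
  have Up_pos: "Up > 0" using box(4) by simp
  have "P / Q \<le> 1 / Lo"
    using bq(1) box(1) P Q by (simp add: divide_simps mult.commute)
  also have "1 / Lo \<le> FF ^ r"
    using box(1,2,4) by (simp add: divide_simps)
  finally have up: "P / Q \<le> 1 + 5 ^ r * X / 5" using Fr by linarith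
  have "1 / Up \<le> P / Q"
    using bq(2) Up_pos P Q by (simp add: divide_simps mult.commute)
  moreover have "1 / (1 + 5 ^ r * X / 5) \<le> 1 / Up"
    using Up_le Fr Up_pos by (intro divide_left_mono) auto
  ultimately have lo: "1 / (1 + 5 ^ r * X / 5) \<le> P / Q" by linarith
  show ?thesis unfolding approx_within_def using up lo by (simp add: P_def Q_def)
qed

end


lemma exp_tail:
  fixes y :: real and N :: nat
  assumes "N > 0" "y \<ge> 11 * ln (real N)"
  shows "exp (-y) \<le> 1 / real N ^ 11"
proof -
  have "exp (-y) \<le> exp (-(11 * ln (real N)))" using assms by simp
  also have "exp (-(11 * ln (real N))) = 1 / exp (real 11 * ln (real N))" by (simp add: exp_minus field_simps)
  also have "exp (real 11 * ln (real N)) = real N ^ 11"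
    unfolding exp_of_nat_mult using assms by simp
  finally show ?thesis .
qed

lemma prob_ge_compl:
  assumes "\<And>x. Q x \<Longrightarrow> P x" "measure_pmf.prob p {x. \<not> Q x} \<le> a"
  shows "measure_pmf.prob p {x. P x} \<ge> 1 - a"
proof -
  have "measure_pmf.prob p {x. \<not> Q x} = 1 - measure_pmf.prob p {x. Q x}"
    using measure_pmf.prob_compl[of "{x. Q x}" p] by (simp add: Compl_eq_Diff_UNIV[symmetric] Collect_neg_eq)
  moreover have "measure_pmf.prob p {x. Q x} \<le> measure_pmf.prob p {x. P x}"
    using assms(1) by (intro measure_pmf.finite_measure_mono) auto
  ultimately show ?thesis using assms(2) by linarith
qed

lemma ln_ge1: "N \<ge> 3 \<Longrightarrow> ln (real N) \<ge> 1"
proof -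
  assume "N \<ge> 3"
  then have "exp 1 \<le> real N" using exp_le by linarith
  then show ?thesis using ln_ge_iff[of "real N" 1] \<open>N \<ge> 3\<close> by simp
qed



lemma five_aux: "(5::real) ^ r * (5 * a * b) / 5 = 5 ^ r * (a * b)"
  by simp

theorem lemma11:
  fixes M :: nat and \<epsilon> \<mu> \<beta> \<sigma> :: real and g :: "nat \<Rightarrow> real"
  assumes "M \<ge> 1" and "\<epsilon> > 0" and "0 < \<mu>" and "\<mu> < 1" and "1/2 < \<beta>" and "\<beta> < 1"
    and "\<sigma> \<ge> 11"
    and "\<forall>l>0. \<forall>\<^sub>F n in sequentially. l * ln (real n) < g n \<and> g n < l * real n"
  shows "\<exists>N0. \<forall>N\<ge>N0. \<forall>E L. good_graph E N \<and> good_walk_length E N L \<longrightarrow>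
     (\<forall>\<Phi> j r. j < M \<longrightarrow>
        (let h = 16 * \<sigma> / (1 - \<beta>);
             K = nat \<lceil>h * g N\<rceil>;
             c = 4 * real M * (2 * real M + 1) / (\<mu> * (1 - \<beta>))
                 * ((exp (\<epsilon>/2) + 1) / (exp (\<epsilon>/2) - 1));
             \<delta>Q = c * sqrt (ln (real N) / g N);
             \<delta>r = 5 ^ r * \<delta>Q
         in measure_pmf.prob (adoption_proc E N L K M \<epsilon> \<mu> \<beta> \<Phi> r)
              {x. approx_within (1 + \<delta>r) (Pw \<mu> \<beta> M \<Phi> r j) (popularity N M r x j)}
            \<ge> 1 - real ((10 * M + 3) * r) / real N ^ 10))"
proof -
  note M1 = assms(1) and eps = assms(2) and mu0 = assms(3) and mu1 = assms(4)
    and b0 = assms(5) and b1 = assms(6) and sig = assms(7) and gas = assms(8)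
  define \<kappa> where "\<kappa> = (exp (\<epsilon>/2) + 1) / (exp (\<epsilon>/2) - 1)"
  have e1: "exp (\<epsilon>/2) > 1" using eps by simp
  have kpos: "\<kappa> > 0"
  proof -
    have "exp (\<epsilon>/2) + 1 > 0" "exp (\<epsilon>/2) - 1 > 0" using e1 by linarith+
    then show ?thesis unfolding \<kappa>_def by (rule divide_pos_pos)
  qed
  have q: "\<mu> * (1 - \<beta>) > 0" using mu0 b1 by simp
  define c0 where "c0 = 4 * real M * (2 * real M + 1) / (\<mu> * (1 - \<beta>)) * \<kappa>"
  have c0: "c0 \<ge> 0" using q kpos by (simp add: c0_def)
  define Zc where "Zc = 4 + 12 * real M * \<kappa> + 48 * real M * (real M + 1) * \<kappa> / \<mu> + 4 * real M / (\<mu> * (1 - \<beta>)) + 5 * c0"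
  have t1: "0 \<le> 12 * real M * \<kappa>" using kpos by simp
  have t2: "0 \<le> 48 * real M * (real M + 1) * \<kappa> / \<mu>" using kpos mu0 by simp
  have t3: "0 \<le> 4 * real M / (\<mu> * (1 - \<beta>))" using q by simp
  have t4: "0 \<le> 5 * c0" using c0 by simp
  have Zc4: "Zc \<ge> 4" using t1 t2 t3 t4 by (simp add: Zc_def)
  define l1 where "l1 = Zc\<^sup>2"
  define l2 where "l2 = (1 - \<beta>) / 88"
  have l1: "l1 > 0" using Zc4 by (simp add: l1_def)
  have l2: "l2 > 0" "l2 < 1" using b0 b1 by (auto simp: l2_def)
  have "\<forall>\<^sub>F n in sequentially. (l1 * ln (real n) < g n \<and> g n < l1 * real n) \<and>
      (l2 * ln (real n) < g n \<and> g n < l2 * real n) \<and> n \<ge> 3"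
  proof -
    have ev1: "\<forall>\<^sub>F n in sequentially. l1 * ln (real n) < g n \<and> g n < l1 * real n" using gas l1 by blast
    have ev2: "\<forall>\<^sub>F n in sequentially. l2 * ln (real n) < g n \<and> g n < l2 * real n" using gas l2 by blast
    show ?thesis by (rule eventually_conj[OF ev1 eventually_conj[OF ev2 eventually_ge_at_top]])
  qed
  then obtain N0 where N0: "\<And>n. n \<ge> N0 \<Longrightarrow> (l1 * ln (real n) < g n \<and> g n < l1 * real n) \<and>
      (l2 * ln (real n) < g n \<and> g n < l2 * real n) \<and> n \<ge> 3"
    unfolding eventually_sequentially by blast
  show ?thesis
  proof (intro exI[of _ N0] allI impI)
    fix N E L \<Phi> j r
    assume NN0: "N \<ge> N0" and gw: "good_graph E N \<and> good_walk_length E N L" and j: "j < M"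
    have walk: "good_walk_length E N L" using gw by blast
    have gN1: "l1 * ln (real N) < g N" and gN2: "g N < l2 * real N" and N3: "N \<ge> 3"
      using N0[OF NN0] by auto
    have lnN: "ln (real N) \<ge> 1" using ln_ge1[OF N3] .
    have RN: "real N \<ge> 3" using N3 by simp
    have gpos: "g N > 0"
    proof -
      have "l1 * ln (real N) > 0" using l1 lnN by simp
      then show ?thesis using gN1 by linarith
    qed
    define s where "s = sqrt (ln (real N) / g N)"
    have s2: "s\<^sup>2 = ln (real N) / g N" using gpos lnN by (simp add: s_def)
    have s0: "s > 0" using gpos lnN by (simp add: s_def)
    have sZ: "s * Zc \<le> 1"
    proof -
      have "ln (real N) / g N \<le> 1 / l1"
        using gN1 gpos l1 lnN by (simp add: divide_simps mult.commute)
      then have "s \<le> sqrt (1 / l1)" unfolding s_def by (rule real_sqrt_le_mono)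
      also have "sqrt (1 / l1) = 1 / Zc" using Zc4 by (simp add: l1_def real_sqrt_divide)
      finally show ?thesis using Zc4 by (simp add: field_simps)
    qed
    have tl: "T * s \<le> 1" if "0 \<le> T" "T \<le> Zc" for T
    proof -
      have "T * s \<le> Zc * s" using that s0 by (intro mult_right_mono) auto
      then show ?thesis using sZ by (simp add: mult.commute)
    qed
    have sA: "s \<le> 1/4" using tl[of 4] Zc4 by simp
    have sB: "6 * real M * \<kappa> * s \<le> 1/2"
      using tl[OF t1] t2 t3 t4 by (simp add: Zc_def)
    have sC: "12 * real M * (real M + 1) * \<kappa> * s / \<mu> \<le> 1/4"
    proof -
      have "48 * real M * (real M + 1) * \<kappa> / \<mu> * s \<le> 1" using tl[OF t2] t1 t3 t4 by (simp add: Zc_def)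
      then show ?thesis by simp
    qed
    have sD: "s * real M / (\<mu> * (1 - \<beta>)) \<le> 1/4"
    proof -
      have "4 * real M / (\<mu> * (1 - \<beta>)) * s \<le> 1" using tl[OF t3] t1 t2 t4 by (simp add: Zc_def)
      then show ?thesis by (simp add: mult.commute)
    qed
    have sE: "5 * (4 * real M * (2 * real M + 1) / (\<mu> * (1 - \<beta>)) * \<kappa>) * s \<le> 1"
      using tl[OF t4] t1 t2 t3 by (simp add: Zc_def c0_def)
    have "l2 * real N \<le> 1 * real N" using l2 RN by (intro mult_right_mono) auto
    then have gleN: "g N \<le> real N" using gN2 by linarith
    have N2: "4 / (real N)\<^sup>2 \<le> s"
    proof -
      have "(4 / (real N)\<^sup>2)\<^sup>2 = 16 / real N ^ 4" by (simp add: power_divide)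
      also have "\<dots> \<le> 1 / real N"
      proof -
        have "(3::real) ^ 3 \<le> real N ^ 3" by (rule power_mono) (use RN in auto)
        then have "16 \<le> real N ^ 3" by simp
        then show ?thesis using RN by (simp add: divide_simps power_eq_if)
      qed
      also have "1 / real N \<le> 1 / g N" using gleN gpos by (intro divide_left_mono) auto
      also have "\<dots> \<le> ln (real N) / g N" using lnN gpos by (intro divide_right_mono) auto
      finally have "(4 / (real N)\<^sup>2)\<^sup>2 \<le> ln (real N) / g N" .
      then show ?thesis unfolding s_def by (rule real_le_rsqrt)
    qed
    have Npos: "N > 0" using N3 by simp
    have tailN: "exp (-(s\<^sup>2 * (real N * (1 - \<beta>) / 2) / 4)) \<le> 1 / real N ^ 11"
    proof (rule exp_tail[OF Npos])
      have "11 \<le> real N * (1 - \<beta>) / (8 * g N)"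
        using gN2 gpos by (simp add: l2_def divide_simps mult.commute)
      then have "ln (real N) * 11 \<le> ln (real N) * (real N * (1 - \<beta>) / (8 * g N))"
        using lnN by (intro mult_left_mono) auto
      also have "\<dots> = s\<^sup>2 * (real N * (1 - \<beta>) / 2) / 4" unfolding s2 by simp
      finally show "11 * ln (real N) \<le> s\<^sup>2 * (real N * (1 - \<beta>) / 2) / 4" by (simp add: mult.commute)
    qed
    define KK where "KK = nat \<lceil>16 * \<sigma> / (1 - \<beta>) * g N\<rceil>"
    have Kge: "real KK \<ge> 16 * \<sigma> / (1 - \<beta>) * g N"
    proof -
      have "16 * \<sigma> / (1 - \<beta>) * g N \<ge> 0" using sig b1 gpos by simp
      then show ?thesis unfolding KK_def by linarith
    qed
    have tailK: "exp (-(s\<^sup>2 * ((1 - \<beta>) / 2 * real KK) / 8)) \<le> 1 / real N ^ 11"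
    proof (rule exp_tail[OF Npos])
      have "s\<^sup>2 * ((1 - \<beta>) / 2 * (16 * \<sigma> / (1 - \<beta>) * g N)) / 8 \<le> s\<^sup>2 * ((1 - \<beta>) / 2 * real KK) / 8"
        using Kge b1 by (intro divide_right_mono mult_left_mono) auto
      moreover have "s\<^sup>2 * ((1 - \<beta>) / 2 * (16 * \<sigma> / (1 - \<beta>) * g N)) / 8 = ln (real N) * \<sigma>"
        unfolding s2 using gpos b1 by (simp add: field_simps)
      moreover have "11 * ln (real N) \<le> ln (real N) * \<sigma>" using sig lnN by (simp add: mult.commute mult_left_mono)
      ultimately show "11 * ln (real N) \<le> s\<^sup>2 * ((1 - \<beta>) / 2 * real KK) / 8" by linarith
    qed
    interpret R: rsetup E N L KK M \<epsilon> \<mu> \<beta> s \<kappa>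
      by unfold_locales (use M1 eps mu0 mu1 b0 b1 N3 walk \<kappa>_def s0 sA sB sC sD sE N2 tailN tailK in auto)
      define X where "X = 5 * (4 * real M * (2 * real M + 1) / (\<mu> * (1 - \<beta>)) * \<kappa>) * s"
      have X: "R.FF \<le> 1 + X" "0 \<le> X" "X \<le> 1"
        using R.FF_le sE q kpos s0 by (auto simp: X_def)
      have eqX: "1 + 5 ^ r * X / 5 = 1 + 5 ^ r * (4 * real M * (2 * real M + 1) / (\<mu> * (1 - \<beta>))
                 * ((exp (\<epsilon>/2) + 1) / (exp (\<epsilon>/2) - 1)) * sqrt (ln (real N) / g N))"
        unfolding X_def \<kappa>_def[symmetric] s_def[symmetric] by (subst five_aux) (rule refl)
      have imp: "approx_within (1 + 5 ^ r * (4 * real M * (2 * real M + 1) / (\<mu> * (1 - \<beta>))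
                 * ((exp (\<epsilon>/2) + 1) / (exp (\<epsilon>/2) - 1)) * sqrt (ln (real N) / g N)))
            (Pw \<mu> \<beta> M \<Phi> r j) (popularity N M r x j)" if "R.G \<Phi> r x" for x
        using R.final_bound[OF that j X] unfolding eqX R.pop_def .
      have pr: "measure_pmf.prob (adoption_proc E N L KK M \<epsilon> \<mu> \<beta> \<Phi> r)
              {x. approx_within (1 + 5 ^ r * (4 * real M * (2 * real M + 1) / (\<mu> * (1 - \<beta>))
                 * ((exp (\<epsilon>/2) + 1) / (exp (\<epsilon>/2) - 1)) * sqrt (ln (real N) / g N)))
            (Pw \<mu> \<beta> M \<Phi> r j) (popularity N M r x j)}
          \<ge> 1 - real r * ((4 * real N * real M + 4 * real M) / real N ^ 11)"
        by (rule prob_ge_compl[OF imp R.adoption_ok])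
      have "real r * ((4 * real N * real M + 4 * real M) / real N ^ 11) \<le> real ((10 * M + 3) * r) / real N ^ 10"
      proof -
        have "(4 * real N * real M + 4 * real M) \<le> (10 * real M + 3) * real N"
        proof -
          have "real M * 1 \<le> real M * real N" using RN by (intro mult_left_mono) auto
          then have "4 * real M \<le> 6 * (real M * real N)" by simp
          moreover have "(10 * real M + 3) * real N = 10 * (real M * real N) + 3 * real N" by (simp add: algebra_simps)
          moreover have "4 * real N * real M = 4 * (real M * real N)" by simp
          ultimately show ?thesis using RN by linarith
        qed
        then have "(4 * real N * real M + 4 * real M) / real N ^ 11 \<le> (10 * real M + 3) * real N / real N ^ 11"
          by (intro divide_right_mono) auto
        also have "\<dots> = (10 * real M + 3) / real N ^ 10" using RN by (simp add: power_eq_if)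
        finally have "real r * ((4 * real N * real M + 4 * real M) / real N ^ 11) \<le> real r * ((10 * real M + 3) / real N ^ 10)"
          by (intro mult_left_mono) auto
        also have "\<dots> = real ((10 * M + 3) * r) / real N ^ 10" by simp
        finally show ?thesis .
      qed
      then show "let h = 16 * \<sigma> / (1 - \<beta>);
             K = nat \<lceil>h * g N\<rceil>;
             c = 4 * real M * (2 * real M + 1) / (\<mu> * (1 - \<beta>))
                 * ((exp (\<epsilon>/2) + 1) / (exp (\<epsilon>/2) - 1));
             \<delta>Q = c * sqrt (ln (real N) / g N);
             \<delta>r = 5 ^ r * \<delta>Q
         in measure_pmf.prob (adoption_proc E N L K M \<epsilon> \<mu> \<beta> \<Phi> r)
              {x. approx_within (1 + \<delta>r) (Pw \<mu> \<beta> M \<Phi> r j) (popularity N M r x j)}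
            \<ge> 1 - real ((10 * M + 3) * r) / real N ^ 10"
        unfolding Let_def KK_def[symmetric] using pr by linarith
  qed
qed


end
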